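(* $L_{KG}$ can be verified by a 2ADfA with bounded error $\epsilon\in(0,1/2)$. Moreover, the protocol achieves perfect completeness.
   Context: The Knapsack-game language is $L_{KG}=\{ S\, \forall(a_1,b_1)\, \exists(e_1,f_1)\, \cdots \, \forall(a_n,b_n)\, \exists(e_n,f_n) \}$, where $S$ and each $a_i,b_i,e_i,f_i$ are natural numbers given in binary, and for every $x\in \prod_{i=1}^{n}\{a_i,b_i\}$ there exists $y\in \prod_{i=1}^{n}\{e_i,f_i\}$ with $S=\sum_{i=1}^{n}(x_i+y_i)$. An affine state of an $m$-state affine register is a vector $v\in\mathbb{R}^m$ whose entries sum to $1$; affine operators are real matrices whose columns each sum to $1$; weighting observes basis state $e_j$ with probability $|v_j|/\|v\|_1$. A 2ADfA is a two-way deterministic finite automaton on the read-only input $¢ w\$$ (left end-marker ¢, right end-marker \$) equipped with finitely many affine registers (with rational transition matrices), each updated by an affine operator or weighted at each step, with the deterministic state and head move then depending on state, symbol and weighting outcomes; it halts upon entering an accepting or rejecting state. The 2ADfA is the verifier in an Arthur–Merlin proof system (public coins: deterministic states, head moves and weighting outcomes are revealed to the all-powerful prover). Verification with error $\epsilon$ (rational): some prover makes every $w\in L$ accepted with probability at least $1-\epsilon$, and for every $w\notin L$ and every prover, $w$ is rejected with probability at least $1-\epsilon$. Perfect completeness means every $w\in L$ is accepted with probability $1$. *)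

theory Defs
  imports Complex_Main
begin

datatype kg_sym = B0 | B1 | All | Ex | LP | RP | Cm

definition bits_val :: "bool list \<Rightarrow> nat" where
  "bits_val bs = foldl (\<lambda>acc b. 2 * acc + (if b then 1 else 0)) 0 bs"

definition enc_bits :: "bool list \<Rightarrow> kg_sym list" where
  "enc_bits bs = map (\<lambda>b. if b then B1 else B0) bs"

definition enc_pair :: "bool list \<Rightarrow> bool list \<Rightarrow> kg_sym list" where
  "enc_pair a b = [LP] @ enc_bits a @ [Cm] @ enc_bits b @ [RP]"

definition enc_block :: "bool list \<times> bool list \<times> bool list \<times> bool list \<Rightarrow> kg_sym list" where
  "enc_block blk = (case blk of (a, b, e, f) \<Rightarrow> [All] @ enc_pair a b @ [Ex] @ enc_pair e f)"

definition kg_true :: "bool list \<Rightarrow> (bool list \<times> bool list \<times> bool list \<times> bool list) list \<Rightarrow> bool" where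
  "kg_true S blocks =
     (\<forall>x :: nat \<Rightarrow> bool. \<exists>y :: nat \<Rightarrow> bool.
        bits_val S = (\<Sum>i<length blocks. case blocks ! i of (a, b, e, f) \<Rightarrow>
            (if x i then bits_val a else bits_val b) + (if y i then bits_val e else bits_val f)))"

definition L_KG :: "kg_sym list set" where
  "L_KG = {enc_bits S @ concat (map enc_block blocks) | S blocks.
            S \<noteq> [] \<and> blocks \<noteq> [] \<and>
            (\<forall>(a, b, e, f) \<in> set blocks. a \<noteq> [] \<and> b \<noteq> [] \<and> e \<noteq> [] \<and> f \<noteq> []) \<and>
            kg_true S blocks}"

text \<open>Tape symbols of the read-only tape with end-markers (LEnd = cent, REnd = dollar).\<close>
datatype 'a tsym = LEnd | REnd | Sym 'a

definition tape :: "'a list \<Rightarrow> nat \<Rightarrow> 'a tsym" where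
  "tape w pos = (if pos = 0 then LEnd else if pos \<le> length w then Sym (w ! (pos - 1)) else REnd)"

text \<open>Action on one affine register: apply a rational affine operator (matrix indexed
  row, column) or weight (measure) it.\<close>
datatype ract = Op "nat \<Rightarrow> nat \<Rightarrow> rat" | Weigh

text \<open>Deterministic states, prover symbols and registers are drawn from nat, restricted
  to finite sets / a finite number of registers. In a step, in state q reading symbol s and receiving
  prover symbol g, register r performs act q s g r; then the new state and head move
  (-1, 0, +1) are trans q s g ou, where ou r is the weighting outcome of register r
  (ou r = 0 for registers not weighted).\<close>
record 'a adfa =
  states :: "nat set"
  init :: nat
  accs :: "nat set"
  rejs :: "nat set"
  palph :: "nat set"
  nregs :: nat
  dim :: "nat \<Rightarrow> nat"
  v0 :: "nat \<Rightarrow> nat \<Rightarrow> rat"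
  act :: "nat \<Rightarrow> 'a tsym \<Rightarrow> nat \<Rightarrow> nat \<Rightarrow> ract"
  trans :: "nat \<Rightarrow> 'a tsym \<Rightarrow> nat \<Rightarrow> (nat \<Rightarrow> nat) \<Rightarrow> nat \<times> int"

definition wf_adfa :: "'a adfa \<Rightarrow> bool" where
  "wf_adfa M \<longleftrightarrow>
     finite (states M) \<and> init M \<in> states M \<and> accs M \<subseteq> states M \<and> rejs M \<subseteq> states M \<and>
     accs M \<inter> rejs M = {} \<and> finite (palph M) \<and> palph M \<noteq> {} \<and>
     (\<forall>r < nregs M. dim M r \<ge> 1 \<and> (\<Sum>i<dim M r. v0 M r i) = 1) \<and>
     (\<forall>q s g r Mx. q \<in> states M \<longrightarrow> g \<in> palph M \<longrightarrow> r < nregs M \<longrightarrow> act M q s g r = Op Mx \<longrightarrow>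
        (\<forall>j < dim M r. (\<Sum>i<dim M r. Mx i j) = 1)) \<and>
     (\<forall>q s g ou. q \<in> states M \<longrightarrow> g \<in> palph M \<longrightarrow>
        fst (trans M q s g ou) \<in> states M \<and> snd (trans M q s g ou) \<in> {-1, 0, 1} \<and>
        (s = LEnd \<longrightarrow> snd (trans M q s g ou) \<noteq> -1) \<and>
        (s = REnd \<longrightarrow> snd (trans M q s g ou) \<noteq> 1))"

definition weighed :: "'a adfa \<Rightarrow> nat \<Rightarrow> 'a tsym \<Rightarrow> nat \<Rightarrow> nat set" where
  "weighed M q s g = {r. r < nregs M \<and> act M q s g r = Weigh}"

definition outs :: "'a adfa \<Rightarrow> nat \<Rightarrow> 'a tsym \<Rightarrow> nat \<Rightarrow> (nat \<Rightarrow> nat) set" where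
  "outs M q s g = {ou. \<forall>r. (r \<in> weighed M q s g \<longrightarrow> ou r < dim M r) \<and>
                          (r \<notin> weighed M q s g \<longrightarrow> ou r = 0)}"

definition wprob :: "'a adfa \<Rightarrow> nat \<Rightarrow> 'a tsym \<Rightarrow> nat \<Rightarrow> (nat \<Rightarrow> nat \<Rightarrow> real) \<Rightarrow> (nat \<Rightarrow> nat) \<Rightarrow> real" where
  "wprob M q s g v ou = (\<Prod>r\<in>weighed M q s g. \<bar>v r (ou r)\<bar> / (\<Sum>i<dim M r. \<bar>v r i\<bar>))"

definition upd :: "'a adfa \<Rightarrow> nat \<Rightarrow> 'a tsym \<Rightarrow> nat \<Rightarrow> (nat \<Rightarrow> nat \<Rightarrow> real) \<Rightarrow> (nat \<Rightarrow> nat) \<Rightarrow> (nat \<Rightarrow> nat \<Rightarrow> real)" where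
  "upd M q s g v ou = (\<lambda>r. if r < nregs M then
        (case act M q s g r of
           Weigh \<Rightarrow> (\<lambda>i. if i = ou r then 1 else 0)
         | Op Mx \<Rightarrow> (\<lambda>i. \<Sum>j<dim M r. real_of_rat (Mx i j) * v r j))
      else v r)"

text \<open>Public information revealed to the prover after each step: new deterministic state,
  new head position, weighting outcomes. A prover maps the history to its next symbol.\<close>
type_synonym obs = "nat \<times> nat \<times> (nat \<Rightarrow> nat)"
type_synonym prover = "obs list \<Rightarrow> nat"

definition prover_ok :: "'a adfa \<Rightarrow> prover \<Rightarrow> bool" where
  "prover_ok M P \<longleftrightarrow> (\<forall>h. P h \<in> palph M)"

text \<open>Probability of halting in a state of T within n steps.\<close>
primrec reach :: "'a adfa \<Rightarrow> 'a list \<Rightarrow> prover \<Rightarrow> nat set \<Rightarrow> nat \<Rightarrow> nat \<Rightarrow> nat \<Rightarrow>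
                  (nat \<Rightarrow> nat \<Rightarrow> real) \<Rightarrow> obs list \<Rightarrow> real" where
  "reach M w P T 0 q pos v h = 0"
| "reach M w P T (Suc n) q pos v h =
     (if q \<in> accs M \<union> rejs M then (if q \<in> T then 1 else 0)
      else (let s = tape w pos; g = P h in
        \<Sum>ou\<in>outs M q s g. wprob M q s g v ou *
           (case trans M q s g ou of (q', d) \<Rightarrow>
              reach M w P T n q' (nat (int pos + d)) (upd M q s g v ou)
                    (h @ [(q', nat (int pos + d), ou)]))))"

definition init_regs :: "'a adfa \<Rightarrow> nat \<Rightarrow> nat \<Rightarrow> real" where
  "init_regs M = (\<lambda>r i. real_of_rat (v0 M r i))"

definition acc_prob :: "'a adfa \<Rightarrow> 'a list \<Rightarrow> prover \<Rightarrow> real" where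
  "acc_prob M w P = (SUP n. reach M w P (accs M) n (init M) 0 (init_regs M) [])"

definition rej_prob :: "'a adfa \<Rightarrow> 'a list \<Rightarrow> prover \<Rightarrow> real" where
  "rej_prob M w P = (SUP n. reach M w P (rejs M) n (init M) 0 (init_regs M) [])"

definition verifies_with_error :: "'a adfa \<Rightarrow> 'a list set \<Rightarrow> rat \<Rightarrow> bool" where
  "verifies_with_error M L eps \<longleftrightarrow> wf_adfa M \<and>
     (\<forall>w\<in>L. \<exists>P. prover_ok M P \<and> acc_prob M w P \<ge> 1 - real_of_rat eps) \<and>
     (\<forall>w. w \<notin> L \<longrightarrow> (\<forall>P. prover_ok M P \<longrightarrow> rej_prob M w P \<ge> 1 - real_of_rat eps))"

definition perfect_completeness :: "'a adfa \<Rightarrow> 'a list set \<Rightarrow> bool" where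
  "perfect_completeness M L \<longleftrightarrow> (\<forall>w\<in>L. \<exists>P. prover_ok M P \<and> acc_prob M w P = 1)"

end

theory Submission
  imports Defs "HOL-Library.Countable"
begin

datatype pst = S0 | S1 | ALP | Aa1 | Aa2 | Ab1 | Ab2 | EEx | ELP | Ee1 | Ee2 | Ef1 | Ef2 | BlkEnd
datatype st = Start | P1 pst bool | Tn | Tf1 bool | Tf bool | Te bool | TEx | TaRP | Tab | TAll | TS
  | AccCoin | Acc | Rej

instance pst :: countable by countable_datatype
instance st :: countable by countable_datatype

lemma UNIV_pst: "(UNIV :: pst set) = {S0, S1, ALP, Aa1, Aa2, Ab1, Ab2, EEx, ELP, Ee1, Ee2, Ef1, Ef2, BlkEnd}"
  by (auto intro: pst.exhaust)

instance pst :: finite by standard (simp add: UNIV_pst)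

lemma UNIV_st: "(UNIV :: st set) = {Start, Tn, TEx, TaRP, Tab, TAll, TS, AccCoin, Acc, Rej}
   \<union> (\<lambda>(d,x). P1 d x) ` UNIV \<union> range Tf1 \<union> range Tf \<union> range Te"
  apply (rule set_eqI) apply (case_tac x) apply auto done

lemma finite_st: "finite (UNIV :: st set)"
  by (simp add: UNIV_st)

definition isbit :: "kg_sym \<Rightarrow> bool" where "isbit s \<longleftrightarrow> s = B0 \<or> s = B1"
definition bvr :: "kg_sym \<Rightarrow> rat" where "bvr s = (if s = B1 then 1 else 0)"

fun delta :: "pst \<Rightarrow> kg_sym \<Rightarrow> pst option" where
  "delta S0 s = (if isbit s then Some S1 else None)"
| "delta S1 s = (if isbit s then Some S1 else if s = All then Some ALP else None)"
| "delta ALP s = (if s = LP then Some Aa1 else None)"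
| "delta Aa1 s = (if isbit s then Some Aa2 else None)"
| "delta Aa2 s = (if isbit s then Some Aa2 else if s = Cm then Some Ab1 else None)"
| "delta Ab1 s = (if isbit s then Some Ab2 else None)"
| "delta Ab2 s = (if isbit s then Some Ab2 else if s = RP then Some EEx else None)"
| "delta EEx s = (if s = Ex then Some ELP else None)"
| "delta ELP s = (if s = LP then Some Ee1 else None)"
| "delta Ee1 s = (if isbit s then Some Ee2 else None)"
| "delta Ee2 s = (if isbit s then Some Ee2 else if s = Cm then Some Ef1 else None)"
| "delta Ef1 s = (if isbit s then Some Ef2 else None)"
| "delta Ef2 s = (if isbit s then Some Ef2 else if s = RP then Some BlkEnd else None)"
| "delta BlkEnd s = (if s = All then Some ALP else None)"

fun coinstep :: "st \<Rightarrow> kg_sym \<Rightarrow> bool" where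
  "coinstep (P1 d x) s = ((d = S1 \<or> d = BlkEnd) \<and> s = All)"
| "coinstep _ s = False"

fun stp :: "st \<Rightarrow> kg_sym tsym \<Rightarrow> nat \<Rightarrow> (nat \<Rightarrow> nat) \<Rightarrow> st \<times> int" where
  "stp Start LEnd g ou = (P1 S0 False, 1)"
| "stp (P1 d x) (Sym s) g ou = (case delta d s of None \<Rightarrow> (Rej, 0)
      | Some d' \<Rightarrow> (P1 d' (if coinstep (P1 d x) s then ou 0 = 0 else x), 1))"
| "stp (P1 d x) REnd g ou = (if d = BlkEnd then (Tn, -1) else (Rej, 0))"
| "stp Tn (Sym s) g ou = (if s = RP then (Tf1 (g = 0), -1) else if isbit s then (TS, -1) else (Rej, 0))"
| "stp (Tf1 c) (Sym s) g ou = (if isbit s then (Tf c, -1) else (Rej, 0))"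
| "stp (Tf c) (Sym s) g ou = (if isbit s then (Tf c, -1) else if s = Cm then (Te c, -1) else (Rej, 0))"
| "stp (Te c) (Sym s) g ou = (if isbit s then (Te c, -1) else if s = LP then (TEx, -1) else (Rej, 0))"
| "stp TEx (Sym s) g ou = (if s = Ex then (TaRP, -1) else (Rej, 0))"
| "stp TaRP (Sym s) g ou = (if s = RP then (Tab, -1) else (Rej, 0))"
| "stp Tab (Sym s) g ou = (if isbit s \<or> s = Cm then (Tab, -1) else if s = LP then (TAll, -1) else (Rej, 0))"
| "stp TAll (Sym s) g ou = (if s = All then (Tn, -1) else (Rej, 0))"
| "stp TS (Sym s) g ou = (if isbit s then (TS, -1) else (Rej, 0))"
| "stp TS LEnd g ou = (if ou 1 = 4 then (AccCoin, 0) else (Rej, 0))"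
| "stp AccCoin LEnd g ou = (if ou 2 = 4 then (Acc, 0) else (Start, 0))"
| "stp _ _ _ _ = (Rej, 0)"

type_synonym tup = "rat \<times> rat \<times> rat \<times> rat \<times> rat \<times> rat"

definition idt :: tup where "idt = (1, 0, 0, 0, 1, 0)"

fun ctup :: "st \<Rightarrow> kg_sym \<Rightarrow> tup" where
  "ctup (P1 d x) s = (if (d = S0 \<or> d = S1) \<and> isbit s then (2, 0, bvr s, 0, 1, 0)
    else if (d = Aa1 \<or> d = Aa2) \<and> isbit s \<and> x then (1, 0, 0, 0, 2, bvr s)
    else if d = Aa2 \<and> s = Cm \<and> x then (1, -1, 0, 0, 0, 0)
    else if (d = Ab1 \<or> d = Ab2) \<and> isbit s \<and> \<not> x then (1, 0, 0, 0, 2, bvr s)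
    else if d = Ab2 \<and> s = RP \<and> \<not> x then (1, -1, 0, 0, 0, 0)
    else idt)"
| "ctup Tn s = (if s = RP then (1, 0, 0, 0, 0, 1) else if isbit s then (1, 0, 0, 0, 0, 0) else idt)"
| "ctup (Tf1 c) s = (if isbit s \<and> \<not> c then (1, - bvr s, 0, 0, 2, 0) else idt)"
| "ctup (Tf c) s = (if isbit s \<and> \<not> c then (1, - bvr s, 0, 0, 2, 0)
     else if s = Cm then (1, 0, 0, 0, 0, 1) else idt)"
| "ctup (Te c) s = (if isbit s \<and> c then (1, - bvr s, 0, 0, 2, 0) else idt)"
| "ctup _ s = idt"

definition AFF :: "tup \<Rightarrow> nat \<Rightarrow> nat \<Rightarrow> rat" where
  "AFF t i j = (case t of (a1, a2, a3, b1, b2, b3) \<Rightarrow>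
     if i < 5 \<and> j < 5 then
       [[a1, 0, a2, 0, a3], [0, a1, 0, a2, -a3], [b1, 0, b2, 0, b3], [0, b1, 0, b2, -b3],
        [1-a1-b1, 1-a1-b1, 1-a2-b2, 1-a2-b2, 1]] ! i ! j else 0)"

definition HALF :: "nat \<Rightarrow> nat \<Rightarrow> rat" where "HALF i j = (if i < 2 \<and> j < 2 then 1/2 else 0)"
definition CONSTM :: "(nat \<Rightarrow> rat) \<Rightarrow> nat \<Rightarrow> nat \<Rightarrow> rat" where "CONSTM u i j = (if i < 5 then u i else 0)"
definition e4r :: "nat \<Rightarrow> rat" where "e4r i = (if i = 4 then 1 else 0)"
definition zr :: "nat \<Rightarrow> nat \<Rightarrow> rat" where
  "zr K i = (if i = 0 then of_nat K else if i = 1 then - of_nat K else if i = 4 then 1 else 0)"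

definition acts :: "nat \<Rightarrow> st \<Rightarrow> kg_sym tsym \<Rightarrow> nat \<Rightarrow> nat \<Rightarrow> ract" where
  "acts K q s g r =
    (if r = 0 then (case s of Sym a \<Rightarrow> if coinstep q a then Weigh else Op HALF | _ \<Rightarrow> Op HALF)
     else if r = 1 then (if q = Start then Op (CONSTM e4r) else if q = TS \<and> s = LEnd then Weigh
        else (case s of Sym a \<Rightarrow> Op (AFF (ctup q a)) | _ \<Rightarrow> Op (AFF idt)))
     else if r = 2 then (if q = Start then Op (CONSTM (zr K)) else if q = AccCoin \<and> s = LEnd then Weigh
        else (case s of Sym a \<Rightarrow> if coinstep q a then Op (AFF (2, 0, 0, 0, 1, 0)) else Op (AFF idt)
               | _ \<Rightarrow> Op (AFF idt)))
     else Op (AFF idt))"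

definition half :: "nat \<Rightarrow> real" where "half i = (if i < 2 then 1/2 else 0)"

definition mach :: "nat \<Rightarrow> kg_sym adfa" where
  "mach K = \<lparr> states = range (to_nat :: st \<Rightarrow> nat), init = to_nat Start, accs = {to_nat Acc}, rejs = {to_nat Rej},
     palph = {0, 1}, nregs = 3, dim = (\<lambda>r. if r = 0 then 2 else 5),
     v0 = (\<lambda>r. if r = 0 then (\<lambda>i. if i < 2 then 1/2 else 0) else if r < 3 then e4r else (\<lambda>_. 0)),
     act = (\<lambda>q s g r. acts K (from_nat q) s g r),
     trans = (\<lambda>q s g ou. (case stp (from_nat q) s g ou of (q', d) \<Rightarrow> (to_nat q', d))) \<rparr>"

lemma AFF_col: "j < 5 \<Longrightarrow> (\<Sum>i<5. AFF t i j) = 1"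
  by (cases t) (auto simp: AFF_def eval_nat_numeral lessThan_Suc less_Suc_eq)

lemma stp_moves: "snd (stp q s g ou) \<in> {-1, 0, 1} \<and> (s = LEnd \<longrightarrow> snd (stp q s g ou) \<noteq> -1)
   \<and> (s = REnd \<longrightarrow> snd (stp q s g ou) \<noteq> 1)"
  by (cases q; cases s) (auto split: option.splits)

lemma wf_mach: "wf_adfa (mach K)"
proof -
  have A: "\<forall>r < nregs (mach K). dim (mach K) r \<ge> 1 \<and> (\<Sum>i<dim (mach K) r. v0 (mach K) r i) = 1"
    by (auto simp: mach_def e4r_def eval_nat_numeral lessThan_Suc)
  have ops: "r \<noteq> 0 \<Longrightarrow> acts K q s g r = Op Mx \<Longrightarrow> Mx \<in> range AFF \<or> Mx = CONSTM e4r \<or> Mx = CONSTM (zr K)"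
    for q s g r Mx by (auto simp: acts_def split: tsym.splits if_splits)
  have s1: "(\<Sum>i<5. CONSTM e4r i j) = 1" for j by (simp add: CONSTM_def e4r_def eval_nat_numeral lessThan_Suc)
  have s2: "(\<Sum>i<5. CONSTM (zr K) i j) = 1" for j by (simp add: CONSTM_def zr_def eval_nat_numeral lessThan_Suc)
  have s3: "j < 2 \<Longrightarrow> (\<Sum>i<2. HALF i j) = 1" for j by (simp add: HALF_def eval_nat_numeral lessThan_Suc)
  have s4: "acts K q s g 0 = Op Mx \<Longrightarrow> Mx = HALF" for q s g Mx by (auto simp: acts_def split: tsym.splits if_splits)
  have B: "\<forall>q s g r Mx. q \<in> states (mach K) \<longrightarrow> g \<in> palph (mach K) \<longrightarrow> r < nregs (mach K) \<longrightarrow>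
      act (mach K) q s g r = Op Mx \<longrightarrow> (\<forall>j < dim (mach K) r. (\<Sum>i<dim (mach K) r. Mx i j) = 1)"
  proof (intro allI impI)
    fix q s g r Mx j
    assume a: "q \<in> states (mach K)" "g \<in> palph (mach K)" "r < nregs (mach K)"
      "act (mach K) q s g r = Op Mx" "j < dim (mach K) r"
    show "(\<Sum>i<dim (mach K) r. Mx i j) = 1"
    proof (cases "r = 0")
      case True
      then show ?thesis using a s3 s4[of "from_nat q" s g Mx] by (simp add: mach_def)
    next
      case False
      then have d: "dim (mach K) r = 5" by (simp add: mach_def)
      from a(4) have "acts K (from_nat q) s g r = Op Mx" by (simp add: mach_def)
      from ops[OF False this] show ?thesis using a(5) d s1 s2 AFF_col s3 s4 False
        by (auto simp: HALF_def)
    qed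
  qed
  have C: "\<forall>q s g ou. q \<in> states (mach K) \<longrightarrow> g \<in> palph (mach K) \<longrightarrow>
        fst (trans (mach K) q s g ou) \<in> states (mach K) \<and> snd (trans (mach K) q s g ou) \<in> {-1, 0, 1} \<and>
        (s = LEnd \<longrightarrow> snd (trans (mach K) q s g ou) \<noteq> -1) \<and>
        (s = REnd \<longrightarrow> snd (trans (mach K) q s g ou) \<noteq> 1)"
  proof (intro allI impI)
    fix q s g ou
    show "fst (trans (mach K) q s g ou) \<in> states (mach K) \<and> snd (trans (mach K) q s g ou) \<in> {-1, 0, 1} \<and>
        (s = LEnd \<longrightarrow> snd (trans (mach K) q s g ou) \<noteq> -1) \<and>
        (s = REnd \<longrightarrow> snd (trans (mach K) q s g ou) \<noteq> 1)"
      using stp_moves[of "from_nat q" s g ou]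
      by (auto simp: mach_def split: prod.splits)
  qed
  show ?thesis unfolding wf_adfa_def using A B C
    by (simp add: mach_def finite_st)
qed

definition V :: "(nat \<Rightarrow> real) \<Rightarrow> (nat \<Rightarrow> real) \<Rightarrow> (nat \<Rightarrow> real) \<Rightarrow> nat \<Rightarrow> nat \<Rightarrow> real" where
  "V a b c = (\<lambda>r. if r = 0 then a else if r = 1 then b else if r = 2 then c else (\<lambda>_. 0))"

fun app :: "nat \<Rightarrow> ract \<Rightarrow> nat \<Rightarrow> (nat \<Rightarrow> real) \<Rightarrow> nat \<Rightarrow> real" where
  "app d (Op Mx) j u = (\<lambda>i. \<Sum>k<d. real_of_rat (Mx i k) * u k)"
| "app d Weigh j u = (\<lambda>i. if i = j then 1 else 0)"

lemma upd_V: "upd (mach K) (to_nat q) s g (V a b c) ou =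
   V (app 2 (acts K q s g 0) (ou 0) a) (app 5 (acts K q s g 1) (ou 1) b) (app 5 (acts K q s g 2) (ou 2) c)"
proof (rule ext)
  fix r
  show "upd (mach K) (to_nat q) s g (V a b c) ou r = V (app 2 (acts K q s g 0) (ou 0) a) (app 5 (acts K q s g 1) (ou 1) b) (app 5 (acts K q s g 2) (ou 2) c) r"
  proof (cases "r < 3")
    case True
    then have "r = 0 \<or> r = 1 \<or> r = 2" by auto
    then show ?thesis unfolding upd_def V_def
      by (auto simp: mach_def split: ract.splits)
  next
    case False
    then show ?thesis unfolding upd_def V_def by (simp add: mach_def)
  qed
qed

definition W :: "st \<Rightarrow> kg_sym tsym \<Rightarrow> nat set" where
  "W q s = (case s of Sym a \<Rightarrow> if coinstep q a then {0} else {}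
      | LEnd \<Rightarrow> if q = TS then {1} else if q = AccCoin then {2} else {} | REnd \<Rightarrow> {})"

lemma coinstep_P1: "coinstep q a \<Longrightarrow> \<exists>d x. q = P1 d x"
  by (cases q) auto

lemma weighed_mach: "weighed (mach K) (to_nat q) s g = W q s"
proof -
  have "weighed (mach K) (to_nat q) s g = {r. r < 3 \<and> acts K q s g r = Weigh}"
    unfolding weighed_def by (simp add: mach_def)
  also have "\<dots> = W q s"
  proof (rule set_eqI)
    fix r
    show "(r \<in> {r. r < 3 \<and> acts K q s g r = Weigh}) = (r \<in> W q s)"
    proof (cases s)
      case (Sym a) then show ?thesis
        by (cases "coinstep q a") (auto simp: acts_def W_def dest: coinstep_P1)
    qed (auto simp: acts_def W_def)
  qed
  finally show ?thesis .
qed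

lemma outs_empty: "weighed M q s g = {} \<Longrightarrow> outs M q s g = {\<lambda>_. 0}"
  unfolding outs_def by (auto simp: fun_eq_iff)

lemma outs_single: "weighed M q s g = {r} \<Longrightarrow>
    outs M q s g = (\<lambda>j. (\<lambda>_. 0)(r := j)) ` {..<dim M r}"
proof
  assume w: "weighed M q s g = {r}"
  show "outs M q s g \<subseteq> (\<lambda>j. (\<lambda>_. 0)(r := j)) ` {..<dim M r}"
  proof
    fix ou assume "ou \<in> outs M q s g"
    then have o: "\<forall>r'. (r' \<in> weighed M q s g \<longrightarrow> ou r' < dim M r') \<and> (r' \<notin> weighed M q s g \<longrightarrow> ou r' = 0)"
      unfolding outs_def by blast
    have "ou = (\<lambda>_. 0)(r := ou r)"
    proof
      fix x show "ou x = ((\<lambda>_. 0)(r := ou r)) x"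
        using o[rule_format, of x] w by (cases "x = r") simp_all
    qed
    moreover have "ou r < dim M r" using o[rule_format, of r] w by simp
    ultimately show "ou \<in> (\<lambda>j. (\<lambda>_. 0)(r := j)) ` {..<dim M r}" by blast
  qed
  show "(\<lambda>j. (\<lambda>_. 0)(r := j)) ` {..<dim M r} \<subseteq> outs M q s g"
  proof
    fix ou assume "ou \<in> (\<lambda>j. (\<lambda>_. 0)(r := j)) ` {..<dim M r}"
    then obtain j where j: "j < dim M r" "ou = (\<lambda>_. 0)(r := j)" by auto
    show "ou \<in> outs M q s g" unfolding outs_def using j w by simp
  qed
qed

lemma reach_halt: "q \<in> accs M \<union> rejs M \<Longrightarrow> reach M w P T (Suc n) q pos v h = (if q \<in> T then 1 else 0)"
  by simp

lemma reach_nonneg: "0 \<le> reach M w P T n q pos v h"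
proof (induction n arbitrary: q pos v h)
  case 0 then show ?case by simp
next
  case (Suc n)
  have "0 \<le> wprob M q s g v ou" for s g ou
    unfolding wprob_def by (intro prod_nonneg) auto
  then show ?case using Suc
    by (auto simp: Let_def intro!: sum_nonneg mult_nonneg_nonneg split: prod.splits)
qed

lemma halting_mach: "to_nat q \<in> accs (mach K) \<union> rejs (mach K) \<longleftrightarrow> q = Acc \<or> q = Rej"
  by (auto simp: mach_def)

lemma acc_mach[simp]: "to_nat q \<in> accs (mach K) \<longleftrightarrow> q = Acc" by (auto simp: mach_def)
lemma rej_mach[simp]: "to_nat q \<in> rejs (mach K) \<longleftrightarrow> q = Rej" by (auto simp: mach_def)

lemma trans_mach: "trans (mach K) (to_nat q) s g ou = (case stp q s g ou of (q', d) \<Rightarrow> (to_nat q', d))"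
  by (simp add: mach_def)

lemma dim_mach: "dim (mach K) r = (if r = 0 then 2 else 5)" by (simp add: mach_def)

lemma reach_det:
  assumes "q \<noteq> Acc" "q \<noteq> Rej" "W q (tape w pos) = {}"
  shows "reach (mach K) w P T (Suc n) (to_nat q) pos v h =
    (case stp q (tape w pos) (P h) (\<lambda>_. 0) of (q', d) \<Rightarrow>
      reach (mach K) w P T n (to_nat q') (nat (int pos + d)) (upd (mach K) (to_nat q) (tape w pos) (P h) v (\<lambda>_. 0))
        (h @ [(to_nat q', nat (int pos + d), \<lambda>_. 0)]))"
proof -
  have w: "weighed (mach K) (to_nat q) (tape w pos) (P h) = {}" using assms by (simp add: weighed_mach)
  have "wprob (mach K) (to_nat q) (tape w pos) (P h) v (\<lambda>_. 0) = 1" by (simp add: wprob_def w)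
  then show ?thesis using assms
    by (simp add: Let_def outs_empty[OF w] trans_mach split: prod.splits)
qed

lemma reach_weigh:
  assumes "q \<noteq> Acc" "q \<noteq> Rej" "W q (tape w pos) = {r}"
  shows "reach (mach K) w P T (Suc n) (to_nat q) pos v h =
    (\<Sum>j<dim (mach K) r. (\<bar>v r j\<bar> / (\<Sum>i<dim (mach K) r. \<bar>v r i\<bar>)) *
    (case stp q (tape w pos) (P h) ((\<lambda>_. 0)(r := j)) of (q', d) \<Rightarrow>
      reach (mach K) w P T n (to_nat q') (nat (int pos + d)) (upd (mach K) (to_nat q) (tape w pos) (P h) v ((\<lambda>_. 0)(r := j)))
        (h @ [(to_nat q', nat (int pos + d), (\<lambda>_. 0)(r := j))])))"
proof -
  have w: "weighed (mach K) (to_nat q) (tape w pos) (P h) = {r}" using assms by (simp add: weighed_mach)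
  have wp: "wprob (mach K) (to_nat q) (tape w pos) (P h) v ((\<lambda>_. 0)(r := j)) = \<bar>v r j\<bar> / (\<Sum>i<dim (mach K) r. \<bar>v r i\<bar>)" for j
    by (simp add: wprob_def w)
  have inj: "inj_on (\<lambda>j. (\<lambda>_. 0::nat)(r := j)) {..<dim (mach K) r}"
    by (auto simp: inj_on_def fun_eq_iff)
  show ?thesis using assms
    apply (simp add: Let_def outs_single[OF w] trans_mach sum.reindex[OF inj])
    apply (simp add: wp)
    apply (intro sum.cong refl)
    apply (auto split: prod.splits)
    done
qed

lemma W_cases: "W q s = {} \<or> (\<exists>r. W q s = {r})"
  by (auto simp: W_def split: tsym.splits)

lemma sum_weights_le1:
  fixes u :: "nat \<Rightarrow> real"
  assumes "\<And>j. j < d \<Longrightarrow> x j \<le> 1"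
  shows "(\<Sum>j<d. (\<bar>u j\<bar> / (\<Sum>i<d. \<bar>u i\<bar>)) * x j) \<le> 1"
proof -
  have "(\<Sum>j<d. (\<bar>u j\<bar> / (\<Sum>i<d. \<bar>u i\<bar>)) * x j) \<le> (\<Sum>j<d. (\<bar>u j\<bar> / (\<Sum>i<d. \<bar>u i\<bar>)))"
  proof (intro sum_mono)
    fix j assume j: "j \<in> {..<d}"
    have "\<bar>u j\<bar> * x j \<le> \<bar>u j\<bar>" using assms[of j] j by (simp add: mult_left_le)
    then have "\<bar>u j\<bar> * x j / (\<Sum>i<d. \<bar>u i\<bar>) \<le> \<bar>u j\<bar> / (\<Sum>i<d. \<bar>u i\<bar>)"
      by (intro divide_right_mono) (auto intro: sum_nonneg)
    then show "\<bar>u j\<bar> / (\<Sum>i<d. \<bar>u i\<bar>) * x j \<le> \<bar>u j\<bar> / (\<Sum>i<d. \<bar>u i\<bar>)" by simp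
  qed
  also have "\<dots> \<le> 1"
  proof (cases "(\<Sum>i<d. \<bar>u i\<bar>) = 0")
    case True then show ?thesis by simp
  next
    case False
    have "(\<Sum>j<d. \<bar>u j\<bar> / (\<Sum>i<d. \<bar>u i\<bar>)) = (\<Sum>j<d. \<bar>u j\<bar>) / (\<Sum>i<d. \<bar>u i\<bar>)"
      by (rule sum_divide_distrib[symmetric])
    also have "\<dots> = 1" using False by simp
    finally show ?thesis by simp
  qed
  finally show ?thesis .
qed

lemma reach_le1: "reach (mach K) w P T n (to_nat (q::st)) pos v h \<le> 1"
proof (induction n arbitrary: q pos v h)
  case 0 then show ?case by simp
next
  case (Suc n)
  show ?case
  proof (cases "q = Acc \<or> q = Rej")
    case True then show ?thesis by auto
  next
    case False
    then have nh: "q \<noteq> Acc" "q \<noteq> Rej" by auto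
    from W_cases[of q "tape w pos"] show ?thesis
    proof
      assume "W q (tape w pos) = {}"
      then show ?thesis unfolding reach_det[OF nh \<open>W q (tape w pos) = {}\<close>] using Suc.IH by (simp split: prod.splits)
    next
      assume "\<exists>r. W q (tape w pos) = {r}"
      then obtain r where r: "W q (tape w pos) = {r}" by blast
      show ?thesis unfolding reach_weigh[OF nh r]
        by (rule sum_weights_le1) (use Suc.IH in \<open>auto split: prod.splits\<close>)
    qed
  qed
qed

definition enc2 :: "real \<Rightarrow> real \<Rightarrow> nat \<Rightarrow> real" where
  "enc2 c p = (\<lambda>i. if i = 0 then c else if i = 1 then - c else if i = 2 then p else if i = 3 then - p
     else if i = 4 then 1 else 0)"

definition affr :: "tup \<Rightarrow> real \<times> real \<Rightarrow> real \<times> real" where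
  "affr t cp = (case t of (a1, a2, a3, b1, b2, b3) \<Rightarrow> case cp of (c, p) \<Rightarrow>
     (of_rat a1 * c + of_rat a2 * p + of_rat a3, of_rat b1 * c + of_rat b2 * p + of_rat b3))"

definition opc :: "st \<Rightarrow> kg_sym \<Rightarrow> real \<times> real \<Rightarrow> real \<times> real" where
  "opc q s cp = affr (ctup q s) cp"

lemma sum5: "(\<Sum>k<(5::nat). f k) = f 0 + f 1 + f 2 + f 3 + (f 4 :: real)"
  by (simp add: eval_nat_numeral lessThan_Suc)

lemma app_AFF: "app 5 (Op (AFF t)) j (enc2 c p) = enc2 (fst (affr t (c, p))) (snd (affr t (c, p)))"
proof (rule ext)
  fix i
  obtain a1 a2 a3 b1 b2 b3 where t: "t = (a1, a2, a3, b1, b2, b3)" by (cases t) auto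
  show "app 5 (Op (AFF t)) j (enc2 c p) i = enc2 (fst (affr t (c, p))) (snd (affr t (c, p))) i"
  proof (cases "i < 5")
    case True
    then have "i = 0 \<or> i = 1 \<or> i = 2 \<or> i = 3 \<or> i = 4" by auto
    then show ?thesis
      by (auto simp: t sum5 AFF_def enc2_def affr_def of_rat_add of_rat_diff of_rat_minus algebra_simps)
  next
    case False then show ?thesis by (simp add: AFF_def enc2_def)
  qed
qed

lemma app_id: "(\<And>i. i \<ge> 5 \<Longrightarrow> u i = 0) \<Longrightarrow> app 5 (Op (AFF idt)) j u = u"
proof (rule ext)
  fix i assume z: "\<And>i. i \<ge> 5 \<Longrightarrow> u i = 0"
  show "app 5 (Op (AFF idt)) j u i = u i"
  proof (cases "i < 5")
    case True
    then have "i = 0 \<or> i = 1 \<or> i = 2 \<or> i = 3 \<or> i = 4" by auto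
    then show ?thesis by (auto simp: sum5 AFF_def idt_def)
  next
    case False then show ?thesis using z by (simp add: AFF_def)
  qed
qed

lemma app_HALF: "u 0 + u 1 = 1 \<Longrightarrow> app 2 (Op HALF) j u = half"
  by (rule ext) (auto simp: HALF_def half_def eval_nat_numeral lessThan_Suc of_rat_divide algebra_simps simp flip: distrib_left)

lemma app_CONST: "(\<Sum>k<5. u k) = 1 \<Longrightarrow> app 5 (Op (CONSTM r)) j u = (\<lambda>i. if i < 5 then of_rat (r i) else 0)"
  by (rule ext) (simp add: CONSTM_def flip: sum_distrib_left)

lemma e4r_enc: "(\<lambda>i. if i < 5 then real_of_rat (e4r i) else 0) = enc2 0 0"
  by (rule ext) (auto simp: e4r_def enc2_def)

lemma zr_enc: "(\<lambda>i. if i < 5 then real_of_rat (zr K i) else 0) = enc2 (real K) 0"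
  by (rule ext) (auto simp: zr_def enc2_def of_rat_minus)

lemma enc2_hi: "i \<ge> 5 \<Longrightarrow> enc2 c p i = 0" by (simp add: enc2_def)

lemma sum_enc2: "(\<Sum>k<5. enc2 c p k) = 1" by (simp add: sum5 enc2_def)

lemma tape_at: "w = pre @ s # post \<Longrightarrow> tape w (Suc (length pre)) = Sym s"
  by (simp add: tape_def nth_append)

lemma tape_0: "tape w 0 = LEnd" by (simp add: tape_def)
lemma tape_end: "tape w (Suc (length w)) = REnd" by (simp add: tape_def)

lemma step_sym:
  assumes "q \<noteq> Acc" "q \<noteq> Rej" "q \<noteq> Start" "tape w pos = Sym s" "\<not> coinstep q s"
    "stp q (Sym s) (P h) (\<lambda>_. 0) = (q', d)" "a 0 + a 1 = 1" "\<And>i. i \<ge> 5 \<Longrightarrow> zz i = 0"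
  shows "reach (mach K) w P T (Suc n) (to_nat q) pos (V a (enc2 c p) zz) h =
    reach (mach K) w P T n (to_nat q') (nat (int pos + d))
      (V half (enc2 (fst (opc q s (c, p))) (snd (opc q s (c, p)))) zz)
      (h @ [(to_nat q', nat (int pos + d), \<lambda>_. 0)])"
proof -
  have W: "W q (tape w pos) = {}" using assms by (simp add: W_def)
  have a0: "acts K q (Sym s) (P h) 0 = Op HALF" using assms by (simp add: acts_def)
  have a1: "acts K q (Sym s) (P h) (Suc 0) = Op (AFF (ctup q s))" using assms by (simp add: acts_def)
  have a2: "acts K q (Sym s) (P h) 2 = Op (AFF idt)" using assms by (simp add: acts_def)
  show ?thesis
    unfolding reach_det[OF assms(1,2) W] using assms
    by (simp add: upd_V a0 a1 a2 app_HALF app_AFF app_id opc_def del: app.simps)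
qed

definition nxt :: "st \<Rightarrow> kg_sym \<Rightarrow> st" where "nxt q s = fst (stp q (Sym s) 0 (\<lambda>_. 0))"

definition blocked :: "st \<Rightarrow> kg_sym \<Rightarrow> bool" where
  "blocked q s \<longleftrightarrow> coinstep q s \<or> (q = Tn \<and> s = RP) \<or> q = Start \<or> nxt q s = Rej"

fun rn :: "st \<Rightarrow> real \<times> real \<Rightarrow> kg_sym list \<Rightarrow> (st \<times> (real \<times> real)) option" where
  "rn q cp [] = Some (q, cp)"
| "rn q cp (s # u) = (if blocked q s then None else rn (nxt q s) (opc q s cp) u)"

lemma rn_append: "rn q cp (u @ v) = (case rn q cp u of None \<Rightarrow> None | Some (q', cp') \<Rightarrow> rn q' cp' v)"
  by (induction u arbitrary: q cp) auto

definition isT :: "st \<Rightarrow> bool" where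
  "isT q \<longleftrightarrow> q \<in> {Tn, TEx, TaRP, Tab, TAll, TS} \<or> (\<exists>c. q = Tf1 c \<or> q = Tf c \<or> q = Te c)"

definition markers :: "nat set" where
  "markers = to_nat ` ({Start} \<union> range (P1 ALP) \<union> range Tf1)"

definition nm :: "obs \<Rightarrow> bool" where "nm ob \<longleftrightarrow> fst ob \<notin> markers"

lemma stp_indep: "\<not> blocked q s \<Longrightarrow> stp q (Sym s) g ou = stp q (Sym s) 0 (\<lambda>_. 0)"
  by (cases q) (auto simp: blocked_def)

lemma nxt_nm: "\<not> blocked q s \<Longrightarrow> to_nat (nxt q s) \<notin> markers"
  unfolding markers_def blocked_def nxt_def
  apply (cases q)
  apply (auto split: option.splits if_splits)
  apply (case_tac x21; case_tac s; auto simp: isbit_def)+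
  done

lemma P1_step: "\<not> blocked (P1 d x) s \<Longrightarrow> stp (P1 d x) (Sym s) 0 (\<lambda>_. 0) = (nxt (P1 d x) s, 1) \<and> (\<exists>d' x'. nxt (P1 d x) s = P1 d' x')"
  by (auto simp: blocked_def nxt_def split: option.splits)

lemma T_step: "isT q \<Longrightarrow> \<not> blocked q s \<Longrightarrow> stp q (Sym s) 0 (\<lambda>_. 0) = (nxt q s, -1) \<and> isT (nxt q s)"
  by (auto simp: isT_def blocked_def nxt_def split: if_splits)

lemma runR:
  assumes "rn (P1 d x) (c, p) u = Some (q', (c', p'))" "w = pre @ u @ post" "a 0 + a 1 = 1"
    "\<And>i. i \<ge> 5 \<Longrightarrow> zz i = 0"
  shows "\<exists>hs. (\<forall>ob\<in>set hs. nm ob) \<and>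
    reach (mach K) w P T (n + length u) (to_nat (P1 d x)) (Suc (length pre)) (V a (enc2 c p) zz) h =
    reach (mach K) w P T n (to_nat q') (Suc (length pre + length u)) (V (if u = [] then a else half) (enc2 c' p') zz) (h @ hs)"
  using assms
proof (induction u arbitrary: pre d x c p a h)
  case Nil then show ?case by (intro exI[of _ "[]"]) simp
next
  case (Cons s u)
  have nb: "\<not> blocked (P1 d x) s" using Cons.prems(1) by (auto split: if_splits)
  obtain d1 x1 where q1: "nxt (P1 d x) s = P1 d1 x1" using P1_step[OF nb] by blast
  have st: "stp (P1 d x) (Sym s) (P h) (\<lambda>_. 0) = (P1 d1 x1, 1)"
    using P1_step[OF nb] stp_indep[OF nb] q1 by simp
  have r1: "rn (P1 d1 x1) (opc (P1 d x) s (c, p)) u = Some (q', (c', p'))"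
    using Cons.prems(1) nb q1 by simp
  have tp: "tape w (Suc (length pre)) = Sym s" using Cons.prems(2) by (simp add: tape_at)
  have cs: "\<not> coinstep (P1 d x) s" using nb by (simp add: blocked_def)
  have step: "reach (mach K) w P T (Suc (n + length u)) (to_nat (P1 d x)) (Suc (length pre)) (V a (enc2 c p) zz) h =
    reach (mach K) w P T (n + length u) (to_nat (P1 d1 x1)) (Suc (Suc (length pre)))
      (V half (enc2 (fst (opc (P1 d x) s (c, p))) (snd (opc (P1 d x) s (c, p)))) zz)
      (h @ [(to_nat (P1 d1 x1), Suc (Suc (length pre)), \<lambda>_. 0)])"
  proof -
    have e: "nat (int (Suc (length pre)) + 1) = Suc (Suc (length pre))" by simp
    have zz: "\<And>i. i \<ge> 5 \<Longrightarrow> zz i = 0" by (rule Cons.prems(4))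
    show ?thesis
      using step_sym[where K=K and T=T and n="n + length u" and P=P and h=h and c=c and p=p and zz=zz, OF _ _ _ tp cs st Cons.prems(3) zz]
      unfolding e by simp
  qed
  have w2: "w = (pre @ [s]) @ u @ post" using Cons.prems(2) by simp
  have "half 0 + half 1 = 1" by (simp add: half_def)
  from Cons.IH[where c="fst (opc (P1 d x) s (c, p))" and p="snd (opc (P1 d x) s (c, p))" and d=d1 and x=x1
     and pre="pre @ [s]" and a=half and h="h @ [(to_nat (P1 d1 x1), Suc (Suc (length pre)), \<lambda>_. 0)]"] r1 w2 this Cons.prems(4)
  obtain hs where hs: "\<forall>ob\<in>set hs. nm ob"
    "reach (mach K) w P T (n + length u) (to_nat (P1 d1 x1)) (Suc (Suc (length pre)))
      (V half (enc2 (fst (opc (P1 d x) s (c, p))) (snd (opc (P1 d x) s (c, p)))) zz)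
      (h @ [(to_nat (P1 d1 x1), Suc (Suc (length pre)), \<lambda>_. 0)]) =
     reach (mach K) w P T n (to_nat q') (Suc (Suc (length pre + length u))) (V half (enc2 c' p') zz)
      (h @ [(to_nat (P1 d1 x1), Suc (Suc (length pre)), \<lambda>_. 0)] @ hs)"
    by (auto simp: if_distrib cong: if_cong)
  have "nm (to_nat (P1 d1 x1), Suc (Suc (length pre)), \<lambda>_. 0)"
    using nxt_nm[OF nb] q1 by (simp add: nm_def)
  then show ?case
    using step hs
    by (intro exI[of _ "(to_nat (P1 d1 x1), Suc (Suc (length pre)), \<lambda>_. 0) # hs"]) simp
qed

lemma runL:
  assumes "rn q (c, p) (rev u) = Some (q', (c', p'))" "isT q" "w = pre @ u @ post" "a 0 + a 1 = 1"
    "\<And>i. i \<ge> 5 \<Longrightarrow> zz i = 0"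
  shows "\<exists>hs. (\<forall>ob\<in>set hs. nm ob) \<and>
    reach (mach K) w P T (n + length u) (to_nat q) (length pre + length u) (V a (enc2 c p) zz) h =
    reach (mach K) w P T n (to_nat q') (length pre) (V (if u = [] then a else half) (enc2 c' p') zz) (h @ hs)"
  using assms
proof (induction u arbitrary: post q c p a h rule: rev_induct)
  case Nil then show ?case by (intro exI[of _ "[]"]) simp
next
  case (snoc s u)
  have rn1: "rn q (c, p) (s # rev u) = Some (q', (c', p'))" using snoc.prems(1) by simp
  have nb: "\<not> blocked q s" using rn1 by (auto split: if_splits)
  define q1 where "q1 = nxt q s"
  have ts: "stp q (Sym s) 0 (\<lambda>_. 0) = (q1, -1)" "isT q1" using T_step[OF snoc.prems(2) nb] q1_def by auto
  have st: "stp q (Sym s) (P h) (\<lambda>_. 0) = (q1, -1)"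
    using ts stp_indep[OF nb] by simp
  have r1: "rn q1 (opc q s (c, p)) (rev u) = Some (q', (c', p'))"
    using rn1 nb q1_def by simp
  have w2: "w = pre @ u @ s # post" using snoc.prems(3) by simp
  have tp: "tape w (Suc (length (pre @ u))) = Sym s" using w2 tape_at[of w "pre @ u" s post] by simp
  have cs: "\<not> coinstep q s" using nb by (simp add: blocked_def)
  have nA: "q \<noteq> Acc" "q \<noteq> Rej" "q \<noteq> Start" using snoc.prems(2) by (auto simp: isT_def)
  have step: "reach (mach K) w P T (Suc (n + length u)) (to_nat q) (Suc (length (pre @ u))) (V a (enc2 c p) zz) h =
    reach (mach K) w P T (n + length u) (to_nat q1) (length pre + length u)
      (V half (enc2 (fst (opc q s (c, p))) (snd (opc q s (c, p)))) zz)
      (h @ [(to_nat q1, length pre + length u, \<lambda>_. 0)])"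
  proof -
    have e: "nat (int (Suc (length (pre @ u))) + -1) = length pre + length u" by simp
    have zz: "\<And>i. i \<ge> 5 \<Longrightarrow> zz i = 0" by (rule snoc.prems(5))
    show ?thesis
      using step_sym[where K=K and T=T and n="n + length u" and P=P and h=h and c=c and p=p and zz=zz, OF nA tp cs st snoc.prems(4) zz]
      unfolding e by simp
  qed
  have "half 0 + half 1 = 1" by (simp add: half_def)
  from snoc.IH[where c="fst (opc q s (c, p))" and p="snd (opc q s (c, p))" and q=q1
     and post="s # post" and a=half and h="h @ [(to_nat q1, length pre + length u, \<lambda>_. 0)]"] r1 ts(2) w2 this snoc.prems(5)
  obtain hs where hs: "\<forall>ob\<in>set hs. nm ob"
    "reach (mach K) w P T (n + length u) (to_nat q1) (length pre + length u)
      (V half (enc2 (fst (opc q s (c, p))) (snd (opc q s (c, p)))) zz)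
      (h @ [(to_nat q1, length pre + length u, \<lambda>_. 0)]) =
     reach (mach K) w P T n (to_nat q') (length pre) (V half (enc2 c' p') zz)
      (h @ [(to_nat q1, length pre + length u, \<lambda>_. 0)] @ hs)"
    by (auto simp: if_distrib cong: if_cong)
  have "nm (to_nat q1, length pre + length u, \<lambda>_. 0)"
    using nxt_nm[OF nb] q1_def by (simp add: nm_def)
  then show ?case
    using step hs
    by (intro exI[of _ "(to_nat q1, length pre + length u, \<lambda>_. 0) # hs"]) simp
qed

definition bsym :: "bool \<Rightarrow> kg_sym" where "bsym b = (if b then B1 else B0)"
definition bv :: "bool \<Rightarrow> real" where "bv b = (if b then 1 else 0)"

lemma enc_bits_Cons: "enc_bits (b # bs) = bsym b # enc_bits bs" by (simp add: enc_bits_def bsym_def)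
lemma enc_bits_Nil: "enc_bits [] = []" by (simp add: enc_bits_def)
lemma enc_bits_rev: "rev (enc_bits bs) = enc_bits (rev bs)" by (simp add: enc_bits_def rev_map)
lemma length_enc_bits[simp]: "length (enc_bits bs) = length bs" by (simp add: enc_bits_def)

lemma foldl_bits: "foldl (\<lambda>acc b. 2 * acc + (if b then 1 else 0)) a bs = a * 2 ^ length bs + foldl (\<lambda>acc b. 2 * acc + (if b then 1 else 0)) (0::nat) bs"
proof (induction bs arbitrary: a)
  case Nil then show ?case by simp
next
  case (Cons b bs)
  have "foldl (\<lambda>acc b. 2 * acc + (if b then 1 else 0)) a (b # bs) = (2 * a + (if b then 1 else 0)) * 2 ^ length bs + foldl (\<lambda>acc b. 2 * acc + (if b then 1 else 0)) (0::nat) bs"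
    using Cons[of "2 * a + (if b then 1 else 0)"] by simp
  moreover have "foldl (\<lambda>acc b. 2 * acc + (if b then 1 else 0)) (0::nat) (b # bs) = (if b then 1 else 0) * 2 ^ length bs + foldl (\<lambda>acc b. 2 * acc + (if b then 1 else 0)) (0::nat) bs"
    using Cons[of "(if b then 1 else 0)"] by simp
  ultimately show ?case by (simp add: algebra_simps)
qed

lemma bits_val_Cons: "real (bits_val (b # bs)) = bv b * 2 ^ length bs + real (bits_val bs)"
  unfolding bits_val_def using foldl_bits[of "if b then 1 else 0" bs] by (simp add: bv_def)

lemma bits_val_snoc: "real (bits_val (bs @ [b])) = 2 * real (bits_val bs) + bv b"
  unfolding bits_val_def by (simp add: bv_def)

lemmas simps1 = blocked_def nxt_def opc_def affr_def isbit_def bvr_def bsym_def bv_def idt_def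

lemma rn_S1: "rn (P1 S1 x) (c, p) (enc_bits bs) = Some (P1 S1 x, (c * 2 ^ length bs + real (bits_val bs), p))"
proof (induction bs arbitrary: c)
  case Nil then show ?case by (simp add: enc_bits_Nil bits_val_def)
next
  case (Cons b bs)
  have "rn (P1 S1 x) (c, p) (enc_bits (b # bs)) = rn (P1 S1 x) (2 * c + bv b, p) (enc_bits bs)"
    by (cases b) (simp_all add: enc_bits_Cons simps1)
  then show ?case using Cons by (simp add: bits_val_Cons algebra_simps)
qed

lemma rn_S0: "bs \<noteq> [] \<Longrightarrow> rn (P1 S0 x) (c, p) (enc_bits bs) = Some (P1 S1 x, (c * 2 ^ length bs + real (bits_val bs), p))"
proof (cases bs)
  case (Cons b bs')
  have "rn (P1 S0 x) (c, p) (enc_bits (b # bs')) = rn (P1 S1 x) (2 * c + bv b, p) (enc_bits bs')"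
    by (cases b) (simp_all add: enc_bits_Cons simps1)
  then show ?thesis using Cons by (simp add: rn_S1 bits_val_Cons algebra_simps)
qed simp

lemma rn_Aa2: "rn (P1 Aa2 x) (c, p) (enc_bits bs) = Some (P1 Aa2 x, (c, if x then p * 2 ^ length bs + real (bits_val bs) else p))"
proof (induction bs arbitrary: p)
  case Nil then show ?case by (simp add: enc_bits_Nil bits_val_def)
next
  case (Cons b bs)
  have "rn (P1 Aa2 x) (c, p) (enc_bits (b # bs)) = rn (P1 Aa2 x) (c, if x then 2 * p + bv b else p) (enc_bits bs)"
    by (cases b; cases x) (simp_all add: enc_bits_Cons simps1)
  then show ?case using Cons by (simp add: bits_val_Cons algebra_simps)
qed

lemma rn_Aa1: "bs \<noteq> [] \<Longrightarrow> rn (P1 Aa1 x) (c, p) (enc_bits bs) = Some (P1 Aa2 x, (c, if x then p * 2 ^ length bs + real (bits_val bs) else p))"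
proof (cases bs)
  case (Cons b bs')
  have "rn (P1 Aa1 x) (c, p) (enc_bits (b # bs')) = rn (P1 Aa2 x) (c, if x then 2 * p + bv b else p) (enc_bits bs')"
    by (cases b; cases x) (simp_all add: enc_bits_Cons simps1)
  then show ?thesis using Cons by (simp add: rn_Aa2 bits_val_Cons algebra_simps)
qed simp

lemma rn_Ab2: "rn (P1 Ab2 x) (c, p) (enc_bits bs) = Some (P1 Ab2 x, (c, if \<not> x then p * 2 ^ length bs + real (bits_val bs) else p))"
proof (induction bs arbitrary: p)
  case Nil then show ?case by (simp add: enc_bits_Nil bits_val_def)
next
  case (Cons b bs)
  have "rn (P1 Ab2 x) (c, p) (enc_bits (b # bs)) = rn (P1 Ab2 x) (c, if \<not> x then 2 * p + bv b else p) (enc_bits bs)"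
    by (cases b; cases x) (simp_all add: enc_bits_Cons simps1)
  then show ?case using Cons by (simp add: bits_val_Cons algebra_simps)
qed

lemma rn_Ab1: "bs \<noteq> [] \<Longrightarrow> rn (P1 Ab1 x) (c, p) (enc_bits bs) = Some (P1 Ab2 x, (c, if \<not> x then p * 2 ^ length bs + real (bits_val bs) else p))"
proof (cases bs)
  case (Cons b bs')
  have "rn (P1 Ab1 x) (c, p) (enc_bits (b # bs')) = rn (P1 Ab2 x) (c, if \<not> x then 2 * p + bv b else p) (enc_bits bs')"
    by (cases b; cases x) (simp_all add: enc_bits_Cons simps1)
  then show ?thesis using Cons by (simp add: rn_Ab2 bits_val_Cons algebra_simps)
qed simp

lemma rn_Ee2: "rn (P1 Ee2 x) cp (enc_bits bs) = Some (P1 Ee2 x, cp)"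
  by (induction bs) (auto simp: enc_bits_Cons enc_bits_Nil simps1)

lemma rn_Ee1: "bs \<noteq> [] \<Longrightarrow> rn (P1 Ee1 x) cp (enc_bits bs) = Some (P1 Ee2 x, cp)"
  by (cases bs) (auto simp: enc_bits_Cons rn_Ee2 simps1)

lemma rn_Ef2: "rn (P1 Ef2 x) cp (enc_bits bs) = Some (P1 Ef2 x, cp)"
  by (induction bs) (auto simp: enc_bits_Cons enc_bits_Nil simps1)

lemma rn_Ef1: "bs \<noteq> [] \<Longrightarrow> rn (P1 Ef1 x) cp (enc_bits bs) = Some (P1 Ef2 x, cp)"
  by (cases bs) (auto simp: enc_bits_Cons rn_Ef2 simps1)

lemma enc_block_eq: "enc_block (a, b, e, f) = [All, LP] @ enc_bits a @ [Cm] @ enc_bits b @ [RP, Ex, LP] @ enc_bits e @ [Cm] @ enc_bits f @ [RP]"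
  by (simp add: enc_block_def enc_pair_def)

lemma rn_blk1:
  assumes "a \<noteq> []" "b \<noteq> []" "e \<noteq> []" "f \<noteq> []"
  shows "rn (P1 ALP x) (c, 0) (tl (enc_block (a, b, e, f))) =
    Some (P1 BlkEnd x, (c - real (if x then bits_val a else bits_val b), 0))"
  using assms
  by (cases x) (simp_all add: enc_block_eq rn_append rn_Aa1 rn_Ab1 rn_Ee1 rn_Ef1 simps1)

lemma rev_enc_snoc: "rev (enc_bits (bs @ [b])) = bsym b # rev (enc_bits bs)"
  by (simp add: enc_bits_def bsym_def)

lemma rn_TfF: "rn (Tf False) (c, p) (rev (enc_bits bs)) = Some (Tf False, (c - p * real (bits_val bs), p * 2 ^ length bs))"
proof (induction bs arbitrary: p c rule: rev_induct)
  case Nil then show ?case by (simp add: enc_bits_Nil bits_val_def)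
next
  case (snoc b bs)
  have "rn (Tf False) (c, p) (rev (enc_bits (bs @ [b]))) = rn (Tf False) (c - bv b * p, 2 * p) (rev (enc_bits bs))"
    by (cases b) (simp_all add: rev_enc_snoc simps1)
  then show ?case using snoc by (simp add: bits_val_snoc algebra_simps)
qed

lemma rn_TfT: "rn (Tf True) cp (rev (enc_bits bs)) = Some (Tf True, cp)"
  by (induction bs rule: rev_induct) (auto simp: rev_enc_snoc enc_bits_Nil simps1)

lemma rn_TeT: "rn (Te True) (c, p) (rev (enc_bits bs)) = Some (Te True, (c - p * real (bits_val bs), p * 2 ^ length bs))"
proof (induction bs arbitrary: p c rule: rev_induct)
  case Nil then show ?case by (simp add: enc_bits_Nil bits_val_def)
next
  case (snoc b bs)
  have "rn (Te True) (c, p) (rev (enc_bits (bs @ [b]))) = rn (Te True) (c - bv b * p, 2 * p) (rev (enc_bits bs))"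
    by (cases b) (simp_all add: rev_enc_snoc simps1)
  then show ?case using snoc by (simp add: bits_val_snoc algebra_simps)
qed

lemma rn_TeF: "rn (Te False) cp (rev (enc_bits bs)) = Some (Te False, cp)"
  by (induction bs rule: rev_induct) (auto simp: rev_enc_snoc enc_bits_Nil simps1)

lemma rn_Tf1: "bs \<noteq> [] \<Longrightarrow> rn (Tf1 ch) cp (rev (enc_bits bs)) = rn (Tf ch) cp (rev (enc_bits bs))"
  by (cases bs rule: rev_cases) (auto simp: rev_enc_snoc simps1)

lemma rn_Tab: "(\<forall>s\<in>set u. isbit s \<or> s = Cm) \<Longrightarrow> rn Tab cp u = Some (Tab, cp)"
  by (induction u) (auto simp: simps1)

lemma rn_TS: "rn TS cp (rev (enc_bits bs)) = Some (TS, cp)"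
  by (induction bs rule: rev_induct) (auto simp: rev_enc_snoc enc_bits_Nil simps1)

lemma rn_Tn_S: "bs \<noteq> [] \<Longrightarrow> rn Tn (c, p) (rev (enc_bits bs)) = Some (TS, (c, 0))"
  by (cases bs rule: rev_cases) (auto simp: rev_enc_snoc rn_TS simps1)

lemma set_enc_bits: "s \<in> set (enc_bits bs) \<Longrightarrow> isbit s"
  by (auto simp: enc_bits_def isbit_def)

lemma rn_blk2:
  assumes "a \<noteq> []" "b \<noteq> []" "e \<noteq> []" "f \<noteq> []"
  shows "rn (Tf1 ch) (c, 1) (tl (rev (enc_block (a, b, e, f)))) =
    Some (Tn, (c - real (if ch then bits_val e else bits_val f), if ch then 2 ^ length e else 1))"
proof -
  have tab: "rn Tab cp (rev (enc_bits bs)) = Some (Tab, cp)" for cp bs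
    by (rule rn_Tab) (auto dest: set_enc_bits)
  have eq: "tl (rev (enc_block (a, b, e, f))) = rev (enc_bits f) @ Cm # rev (enc_bits e) @ [LP, Ex, RP] @
     (rev (enc_bits b) @ Cm # rev (enc_bits a)) @ [LP, All]"
    by (simp add: enc_block_eq)
  show ?thesis
    unfolding eq using assms
    by (cases ch) (simp_all add: rn_append rn_Tf1 rn_TfF rn_TfT rn_TeT rn_TeF tab simps1 del: append_assoc)
qed

definition seg :: "obs list \<Rightarrow> obs list" where
  "seg h = rev (takeWhile (\<lambda>ob. fst ob \<noteq> to_nat Start) (rev h))"
definition xs_of :: "obs list \<Rightarrow> bool list" where
  "xs_of h = map (\<lambda>ob. fst ob = to_nat (P1 ALP True)) (filter (\<lambda>ob. fst ob \<in> to_nat ` range (P1 ALP)) (seg h))"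
definition nq :: "obs list \<Rightarrow> nat" where
  "nq h = length (filter (\<lambda>ob. fst ob \<in> to_nat ` range Tf1) (seg h))"

lemma seg_snoc: "seg (h @ [ob]) = (if fst ob = to_nat Start then [] else seg h @ [ob])"
  by (simp add: seg_def)

lemma seg_Nil: "seg [] = []" by (simp add: seg_def)

lemma hist_nm1: "nm ob \<Longrightarrow> xs_of (h @ [ob]) = xs_of h \<and> nq (h @ [ob]) = nq h"
  by (auto simp: nm_def markers_def xs_of_def nq_def seg_snoc)

lemma hist_nm: "\<forall>ob\<in>set hs. nm ob \<Longrightarrow> xs_of (h @ hs) = xs_of h \<and> nq (h @ hs) = nq h"
proof (induction hs arbitrary: h)
  case Nil then show ?case by simp
next
  case (Cons ob hs)
  then show ?case using hist_nm1[of ob h] Cons.IH[of "h @ [ob]"] by simp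
qed

lemma hist_coin: "xs_of (h @ [(to_nat (P1 ALP b), pos, ou)]) = xs_of h @ [b] \<and> nq (h @ [(to_nat (P1 ALP b), pos, ou)]) = nq h"
  by (auto simp: xs_of_def nq_def seg_snoc)

lemma hist_q: "xs_of (h @ [(to_nat (Tf1 c), pos, ou)]) = xs_of h \<and> nq (h @ [(to_nat (Tf1 c), pos, ou)]) = Suc (nq h)"
  by (auto simp: xs_of_def nq_def seg_snoc)

lemma hist_start: "xs_of (h @ [(to_nat Start, pos, ou)]) = [] \<and> nq (h @ [(to_nat Start, pos, ou)]) = 0"
  by (auto simp: xs_of_def nq_def seg_snoc)

lemma V_0[simp]: "V a b c 0 = a" and V_1[simp]: "V a b c (Suc 0) = b" and V_2[simp]: "V a b c 2 = c"
  by (simp_all add: V_def)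

definition ee :: "nat \<Rightarrow> nat \<Rightarrow> real" where "ee j = (\<lambda>i. if i = j then 1 else 0)"

lemma app_W: "app d Weigh j u = ee j" by (simp add: ee_def fun_eq_iff)

lemma np: "nat (int pos + 1) = Suc pos" by simp

lemma sum2: "(\<Sum>k<(2::nat). f k) = f 0 + (f 1 :: real)"
  by (simp add: eval_nat_numeral lessThan_Suc)

lemma coin_step:
  assumes "d = S1 \<or> d = BlkEnd" "tape w pos = Sym All"
  shows "reach (mach K) w P T (Suc n) (to_nat (P1 d x)) pos (V half (enc2 c p) (enc2 z 0)) h =
    1/2 * reach (mach K) w P T n (to_nat (P1 ALP True)) (Suc pos) (V (ee 0) (enc2 c p) (enc2 (2 * z) 0))
       (h @ [(to_nat (P1 ALP True), Suc pos, (\<lambda>_. 0)(0 := 0))]) +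
    1/2 * reach (mach K) w P T n (to_nat (P1 ALP False)) (Suc pos) (V (ee 1) (enc2 c p) (enc2 (2 * z) 0))
       (h @ [(to_nat (P1 ALP False), Suc pos, (\<lambda>_. 0)(0 := 1))])"
proof -
  have nh: "P1 d x \<noteq> Acc" "P1 d x \<noteq> Rej" by auto
  have cs: "coinstep (P1 d x) All" using assms by auto
  have Wq: "W (P1 d x) (tape w pos) = {0}" using assms cs by (simp add: W_def)
  have a0: "acts K (P1 d x) (Sym All) g 0 = Weigh" for g using cs by (simp add: acts_def)
  have a1: "acts K (P1 d x) (Sym All) g (Suc 0) = Op (AFF idt)" for g using assms by (auto simp: acts_def isbit_def)
  have a2: "acts K (P1 d x) (Sym All) g 2 = Op (AFF (2, 0, 0, 0, 1, 0))" for g using cs by (simp add: acts_def)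
  have st: "stp (P1 d x) (Sym All) g ou = (P1 ALP (ou 0 = 0), 1)" for g ou using assms by (auto simp: isbit_def)
  have idc: "affr idt (c, p) = (c, p)" by (simp add: affr_def idt_def)
  have zc: "affr (2, 0, 0, 0, 1, 0) (z, 0) = (2 * z, 0)" by (simp add: affr_def)
  have e0: "(\<lambda>i. if i = 0 then 1 else 0) = (ee 0 :: nat \<Rightarrow> real)" by (simp add: ee_def fun_eq_iff)
  have e1: "(\<lambda>i. if i = Suc 0 then 1 else 0) = (ee 1 :: nat \<Rightarrow> real)" by (simp add: ee_def fun_eq_iff)
  show ?thesis
    unfolding reach_weigh[OF nh Wq] assms(2) st
    by (simp add: sum2 dim_mach half_def upd_V a0 a1 a2 app_AFF idc zc app_W np del: app.simps)
qed

lemma enc2_vals: "enc2 c p 0 = c" "enc2 c p (Suc 0) = - c" "enc2 c p 2 = p" "enc2 c p 3 = - p" "enc2 c p 4 = 1"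
  by (simp_all add: enc2_def)

lemma ee4: "ee 4 = enc2 0 0" by (simp add: ee_def enc2_def fun_eq_iff)

lemma ee_hi: "i \<ge> 5 \<Longrightarrow> j < 5 \<Longrightarrow> ee j i = 0" by (simp add: ee_def)

lemma sum_ee: "j < 5 \<Longrightarrow> (\<Sum>k<5. ee j k) = 1"
  by (simp add: ee_def)

lemma rend_step:
  assumes "tape w pos = REnd" "pos \<ge> 1" "a 0 + a 1 = 1" "\<And>i. i \<ge> 5 \<Longrightarrow> b i = 0" "\<And>i. i \<ge> 5 \<Longrightarrow> zz i = 0"
  shows "reach (mach K) w P T (Suc n) (to_nat (P1 BlkEnd x)) pos (V a b zz) h =
    reach (mach K) w P T n (to_nat Tn) (pos - 1) (V half b zz) (h @ [(to_nat Tn, pos - 1, \<lambda>_. 0)])"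
proof -
  have nh: "P1 BlkEnd x \<noteq> Acc" "P1 BlkEnd x \<noteq> Rej" by auto
  have Wq: "W (P1 BlkEnd x) (tape w pos) = {}" using assms by (simp add: W_def)
  have e: "nat (int pos - 1) = pos - 1" using assms(2) by simp
  have a0: "acts K (P1 BlkEnd x) REnd g 0 = Op HALF" for g by (simp add: acts_def)
  have a1: "acts K (P1 BlkEnd x) REnd g (Suc 0) = Op (AFF idt)" for g by (simp add: acts_def)
  have a2: "acts K (P1 BlkEnd x) REnd g 2 = Op (AFF idt)" for g by (simp add: acts_def)
  show ?thesis
    unfolding reach_det[OF nh Wq] assms(1)
    using assms(3-5) by (simp add: e upd_V a0 a1 a2 app_HALF app_id del: app.simps)
qed

lemma test_step:
  assumes "a 0 + a 1 = 1" "\<And>i. i \<ge> 5 \<Longrightarrow> zz i = 0"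
  shows "reach (mach K) w P T (Suc (Suc m)) (to_nat TS) 0 (V a (enc2 c 0) zz) h =
    (2 * \<bar>c\<bar> / (2 * \<bar>c\<bar> + 1)) * (if to_nat Rej \<in> T then 1 else 0) +
    (1 / (2 * \<bar>c\<bar> + 1)) * reach (mach K) w P T (Suc m) (to_nat AccCoin) 0 (V half (enc2 0 0) zz)
       (h @ [(to_nat AccCoin, 0, (\<lambda>_. 0)(1 := 4))])"
proof -
  have nh: "TS \<noteq> Acc" "TS \<noteq> Rej" by auto
  have Wq: "W TS (tape w 0) = {1}" by (simp add: W_def tape_0)
  have a0: "acts K TS LEnd g 0 = Op HALF" for g by (simp add: acts_def)
  have a1: "acts K TS LEnd g (Suc 0) = Weigh" for g by (simp add: acts_def)
  have a2: "acts K TS LEnd g 2 = Op (AFF idt)" for g by (simp add: acts_def)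
  have sm: "(\<Sum>i<5. \<bar>enc2 c 0 i\<bar>) = 2 * \<bar>c\<bar> + 1" by (simp add: sum5 enc2_def)
  have pos: "2 * \<bar>c\<bar> + 1 > 0" by simp
  have dm: "dim (mach K) 1 = 5" by (simp add: dim_mach)
  have V1: "V a b zz 1 = b" for a b zz by (simp add: V_def)
  have st: "stp TS LEnd g ou = (if ou 1 = 4 then (AccCoin, 0) else (Rej, 0))" for g ou by simp
  show ?thesis
    unfolding reach_weigh[OF nh Wq] tape_0 dm V1 sm sum5
    using assms
    by (simp add: upd_V a0 a1 a2 app_HALF app_id app_W ee4 reach_halt enc2_vals enc2_hi del: app.simps reach.simps)
qed

lemma acc_step:
  assumes "a 0 + a 1 = 1" "\<And>i. i \<ge> 5 \<Longrightarrow> b i = 0"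
  shows "reach (mach K) w P T (Suc (Suc m)) (to_nat AccCoin) 0 (V a b (enc2 z 0)) h =
    (1 / (2 * \<bar>z\<bar> + 1)) * (if to_nat Acc \<in> T then 1 else 0) +
    (\<bar>z\<bar> / (2 * \<bar>z\<bar> + 1)) * (reach (mach K) w P T (Suc m) (to_nat Start) 0 (V half b (ee 0))
       (h @ [(to_nat Start, 0, (\<lambda>_. 0)(2 := 0))]) +
     reach (mach K) w P T (Suc m) (to_nat Start) 0 (V half b (ee 1))
       (h @ [(to_nat Start, 0, (\<lambda>_. 0)(2 := 1))]))"
proof -
  have nh: "AccCoin \<noteq> Acc" "AccCoin \<noteq> Rej" by auto
  have Wq: "W AccCoin (tape w 0) = {2}" by (simp add: W_def tape_0)
  have a0: "acts K AccCoin LEnd g 0 = Op HALF" for g by (simp add: acts_def)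
  have a1: "acts K AccCoin LEnd g (Suc 0) = Op (AFF idt)" for g by (simp add: acts_def)
  have a2: "acts K AccCoin LEnd g 2 = Weigh" for g by (simp add: acts_def)
  have sm: "(\<Sum>i<5. \<bar>enc2 z 0 i\<bar>) = 2 * \<bar>z\<bar> + 1" by (simp add: sum5 enc2_def)
  have dm: "dim (mach K) 2 = 5" by (simp add: dim_mach)
  show ?thesis
    unfolding reach_weigh[OF nh Wq] tape_0 dm V_2 sm sum5
    using assms
    by (simp add: upd_V a0 a1 a2 app_HALF app_id app_W reach_halt enc2_vals distrib_left del: app.simps reach.simps)
qed

lemma start_step:
  assumes "a 0 + a 1 = 1" "(\<Sum>k<5. b k) = 1" "(\<Sum>k<5. zz k) = 1"
  shows "reach (mach K) w P T (Suc n) (to_nat Start) 0 (V a b zz) h =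
    reach (mach K) w P T n (to_nat (P1 S0 False)) 1 (V half (enc2 0 0) (enc2 (real K) 0))
      (h @ [(to_nat (P1 S0 False), 1, \<lambda>_. 0)])"
proof -
  have nh: "Start \<noteq> Acc" "Start \<noteq> Rej" by auto
  have Wq: "W Start (tape w 0) = {}" by (simp add: W_def tape_0)
  have a0: "acts K Start LEnd g 0 = Op HALF" for g by (simp add: acts_def)
  have a1: "acts K Start LEnd g (Suc 0) = Op (CONSTM e4r)" for g by (simp add: acts_def)
  have a2: "acts K Start LEnd g 2 = Op (CONSTM (zr K))" for g by (simp add: acts_def)
  show ?thesis
    unfolding reach_det[OF nh Wq] tape_0
    using assms by (simp add: upd_V a0 a1 a2 app_HALF app_CONST e4r_enc zr_enc del: app.simps)
qed

type_synonym blk = "bool list \<times> bool list \<times> bool list \<times> bool list"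

definition xv :: "blk \<Rightarrow> bool \<Rightarrow> nat" where "xv blk t = (case blk of (a, b, e, f) \<Rightarrow> if t then bits_val a else bits_val b)"
definition yv :: "blk \<Rightarrow> bool \<Rightarrow> nat" where "yv blk t = (case blk of (a, b, e, f) \<Rightarrow> if t then bits_val e else bits_val f)"
definition xsum :: "blk list \<Rightarrow> bool list \<Rightarrow> nat" where "xsum bl xs = (\<Sum>i<length bl. xv (bl ! i) (xs ! i))"
definition ysum :: "blk list \<Rightarrow> (nat \<Rightarrow> bool) \<Rightarrow> nat" where "ysum bl Y = (\<Sum>i<length bl. yv (bl ! i) (Y i))"

lemma xsum_Cons: "xsum (blk # bl) (t # xs) = xv blk t + xsum bl xs"
  unfolding xsum_def length_Cons sum.lessThan_Suc_shift by simp

lemma xsum_single: "xsum [blk] [t] = xv blk t" by (simp add: xsum_def)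

definition nonemp :: "blk \<Rightarrow> bool" where "nonemp blk = (case blk of (a, b, e, f) \<Rightarrow> a \<noteq> [] \<and> b \<noteq> [] \<and> e \<noteq> [] \<and> f \<noteq> [])"

fun avgF :: "nat \<Rightarrow> (bool list \<Rightarrow> real) \<Rightarrow> real" where
  "avgF 0 F = F []"
| "avgF (Suc m) F = (avgF m (\<lambda>xs. F (True # xs)) + avgF m (\<lambda>xs. F (False # xs))) / 2"

lemma half_sum: "half 0 + half 1 = 1" by (simp add: half_def)
lemma ee_sum: "j < 2 \<Longrightarrow> ee j 0 + ee j 1 = 1" by (auto simp: ee_def)

lemma p1_block:
  assumes "d = S1 \<or> d = BlkEnd" "w = pre @ enc_block blk @ post" "nonemp blk"
  shows "\<exists>hT hF. xs_of (h @ hT) = xs_of h @ [True] \<and> nq (h @ hT) = nq h \<and>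
     xs_of (h @ hF) = xs_of h @ [False] \<and> nq (h @ hF) = nq h \<and>
     reach (mach K) w P T (n + length (enc_block blk)) (to_nat (P1 d x)) (Suc (length pre)) (V half (enc2 c 0) (enc2 z 0)) h =
     1/2 * reach (mach K) w P T n (to_nat (P1 BlkEnd True)) (Suc (length pre + length (enc_block blk)))
       (V half (enc2 (c - real (xv blk True)) 0) (enc2 (2 * z) 0)) (h @ hT) +
     1/2 * reach (mach K) w P T n (to_nat (P1 BlkEnd False)) (Suc (length pre + length (enc_block blk)))
       (V half (enc2 (c - real (xv blk False)) 0) (enc2 (2 * z) 0)) (h @ hF)"
proof -
  obtain a b e f where blk: "blk = (a, b, e, f)" by (cases blk) auto
  have ne: "a \<noteq> []" "b \<noteq> []" "e \<noteq> []" "f \<noteq> []" using assms(3) by (auto simp: nonemp_def blk)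
  define u where "u = tl (enc_block blk)"
  have eb: "enc_block blk = All # u" by (simp add: u_def blk enc_block_eq)
  have len: "length (enc_block blk) = Suc (length u)" by (simp add: eb)
  have w2: "w = (pre @ [All]) @ u @ post" using assms(2) eb by simp
  have tp: "tape w (Suc (length pre)) = Sym All" using assms(2) eb by (simp add: tape_at)
  have zz: "\<And>i. i \<ge> 5 \<Longrightarrow> enc2 (2 * z) 0 i = 0" by (simp add: enc2_hi)
  have run: "\<exists>hs. (\<forall>ob\<in>set hs. nm ob) \<and>
     reach (mach K) w P T (n + length u) (to_nat (P1 ALP t)) (Suc (length (pre @ [All]))) (V (ee j) (enc2 c 0) (enc2 (2 * z) 0)) h' =
     reach (mach K) w P T n (to_nat (P1 BlkEnd t)) (Suc (length (pre @ [All]) + length u))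
       (V half (enc2 (c - real (xv blk t)) 0) (enc2 (2 * z) 0)) (h' @ hs)" if "j < 2" for t j h'
  proof -
    have r: "rn (P1 ALP t) (c, 0) u = Some (P1 BlkEnd t, (c - real (xv blk t), 0))"
      using rn_blk1[OF ne, of t c] by (simp add: u_def blk xv_def)
    have "u \<noteq> []" by (simp add: u_def blk enc_block_eq)
    then show ?thesis using runR[where K=K and P=P and T=T and n=n and h=h', OF r w2 ee_sum[OF that] zz] by simp
  qed
  obtain hsT where hsT: "\<forall>ob\<in>set hsT. nm ob"
    "reach (mach K) w P T (n + length u) (to_nat (P1 ALP True)) (Suc (length (pre @ [All]))) (V (ee 0) (enc2 c 0) (enc2 (2 * z) 0))
       (h @ [(to_nat (P1 ALP True), Suc (Suc (length pre)), (\<lambda>_. 0)(0 := 0))]) =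
     reach (mach K) w P T n (to_nat (P1 BlkEnd True)) (Suc (length (pre @ [All]) + length u))
       (V half (enc2 (c - real (xv blk True)) 0) (enc2 (2 * z) 0)) ((h @ [(to_nat (P1 ALP True), Suc (Suc (length pre)), (\<lambda>_. 0)(0 := 0))]) @ hsT)"
    using run[of 0 True "h @ [(to_nat (P1 ALP True), Suc (Suc (length pre)), (\<lambda>_. 0)(0 := 0))]"] by auto
  obtain hsF where hsF: "\<forall>ob\<in>set hsF. nm ob"
    "reach (mach K) w P T (n + length u) (to_nat (P1 ALP False)) (Suc (length (pre @ [All]))) (V (ee 1) (enc2 c 0) (enc2 (2 * z) 0))
       (h @ [(to_nat (P1 ALP False), Suc (Suc (length pre)), (\<lambda>_. 0)(0 := 1))]) =
     reach (mach K) w P T n (to_nat (P1 BlkEnd False)) (Suc (length (pre @ [All]) + length u))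
       (V half (enc2 (c - real (xv blk False)) 0) (enc2 (2 * z) 0)) ((h @ [(to_nat (P1 ALP False), Suc (Suc (length pre)), (\<lambda>_. 0)(0 := 1))]) @ hsF)"
    using run[of 1 False "h @ [(to_nat (P1 ALP False), Suc (Suc (length pre)), (\<lambda>_. 0)(0 := 1))]"] by auto
  have cs: "reach (mach K) w P T (Suc (n + length u)) (to_nat (P1 d x)) (Suc (length pre)) (V half (enc2 c 0) (enc2 z 0)) h =
    1/2 * reach (mach K) w P T (n + length u) (to_nat (P1 ALP True)) (Suc (Suc (length pre))) (V (ee 0) (enc2 c 0) (enc2 (2 * z) 0))
       (h @ [(to_nat (P1 ALP True), Suc (Suc (length pre)), (\<lambda>_. 0)(0 := 0))]) +
    1/2 * reach (mach K) w P T (n + length u) (to_nat (P1 ALP False)) (Suc (Suc (length pre))) (V (ee 1) (enc2 c 0) (enc2 (2 * z) 0))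
       (h @ [(to_nat (P1 ALP False), Suc (Suc (length pre)), (\<lambda>_. 0)(0 := 1))])"
    by (rule coin_step[OF assms(1) tp])
  let ?hT = "(to_nat (P1 ALP True), Suc (Suc (length pre)), (\<lambda>_. 0)(0 := 0)) # hsT"
  let ?hF = "(to_nat (P1 ALP False), Suc (Suc (length pre)), (\<lambda>_. 0)(0 := 1)) # hsF"
  have h1: "xs_of (h @ ?hT) = xs_of h @ [True] \<and> nq (h @ ?hT) = nq h"
    using hist_nm[OF hsT(1), of "h @ [(to_nat (P1 ALP True), Suc (Suc (length pre)), (\<lambda>_. 0)(0 := 0))]"] hist_coin by simp
  have h2: "xs_of (h @ ?hF) = xs_of h @ [False] \<and> nq (h @ ?hF) = nq h"
    using hist_nm[OF hsF(1), of "h @ [(to_nat (P1 ALP False), Suc (Suc (length pre)), (\<lambda>_. 0)(0 := 1))]"] hist_coin by simp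
  show ?thesis
    apply (rule exI[of _ ?hT], rule exI[of _ ?hF])
    using h1 h2 cs hsT(2) hsF(2) len by simp
qed

lemma p1_blocks:
  assumes "bl \<noteq> []" "\<forall>blk\<in>set bl. nonemp blk" "d = S1 \<or> d = BlkEnd" "w = pre @ concat (map enc_block bl) @ post"
    "\<forall>xs h' x'. length xs = length bl \<longrightarrow> xs_of h' = xs_of h @ xs \<longrightarrow> nq h' = nq h \<longrightarrow>
       F xs \<le> reach (mach K) w P T n (to_nat (P1 BlkEnd x')) (Suc (length pre + length (concat (map enc_block bl))))
         (V half (enc2 (c - real (xsum bl xs)) 0) (enc2 (z * 2 ^ length bl) 0)) h'"
  shows "avgF (length bl) F \<le> reach (mach K) w P T (n + length (concat (map enc_block bl))) (to_nat (P1 d x)) (Suc (length pre))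
     (V half (enc2 c 0) (enc2 z 0)) h"
  using assms
proof (induction bl arbitrary: pre d x c z h F post rule: list_nonempty_induct)
  case (single blk)
  from p1_block[of d w pre blk post h K P T n x c z] single.prems
  obtain hT hF where hh: "xs_of (h @ hT) = xs_of h @ [True]" "nq (h @ hT) = nq h"
     "xs_of (h @ hF) = xs_of h @ [False]" "nq (h @ hF) = nq h" and
     eq: "reach (mach K) w P T (n + length (enc_block blk)) (to_nat (P1 d x)) (Suc (length pre)) (V half (enc2 c 0) (enc2 z 0)) h =
     1/2 * reach (mach K) w P T n (to_nat (P1 BlkEnd True)) (Suc (length pre + length (enc_block blk)))
       (V half (enc2 (c - real (xv blk True)) 0) (enc2 (2 * z) 0)) (h @ hT) +
     1/2 * reach (mach K) w P T n (to_nat (P1 BlkEnd False)) (Suc (length pre + length (enc_block blk)))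
       (V half (enc2 (c - real (xv blk False)) 0) (enc2 (2 * z) 0)) (h @ hF)" by auto
  have 1: "F [True] \<le> reach (mach K) w P T n (to_nat (P1 BlkEnd True)) (Suc (length pre + length (enc_block blk)))
       (V half (enc2 (c - real (xv blk True)) 0) (enc2 (2 * z) 0)) (h @ hT)"
    using single.prems(4)[rule_format, of "[True]" "h @ hT" True] hh by (simp add: xsum_single mult.commute)
  have 2: "F [False] \<le> reach (mach K) w P T n (to_nat (P1 BlkEnd False)) (Suc (length pre + length (enc_block blk)))
       (V half (enc2 (c - real (xv blk False)) 0) (enc2 (2 * z) 0)) (h @ hF)"
    using single.prems(4)[rule_format, of "[False]" "h @ hF" False] hh by (simp add: xsum_single mult.commute)
  show ?case using 1 2 eq by simp
next
  case (cons blk bl)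
  have nb: "nonemp blk" "\<forall>b\<in>set bl. nonemp b" using cons.prems(1) by auto
  have w1: "w = pre @ enc_block blk @ (concat (map enc_block bl) @ post)" using cons.prems(3) by simp
  from p1_block[OF cons.prems(2) w1 nb(1), of h K P T "n + length (concat (map enc_block bl))" x c z]
  obtain hT hF where hh: "xs_of (h @ hT) = xs_of h @ [True]" "nq (h @ hT) = nq h"
     "xs_of (h @ hF) = xs_of h @ [False]" "nq (h @ hF) = nq h" and
     eq: "reach (mach K) w P T (n + length (concat (map enc_block bl)) + length (enc_block blk)) (to_nat (P1 d x)) (Suc (length pre)) (V half (enc2 c 0) (enc2 z 0)) h =
     1/2 * reach (mach K) w P T (n + length (concat (map enc_block bl))) (to_nat (P1 BlkEnd True)) (Suc (length pre + length (enc_block blk)))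
       (V half (enc2 (c - real (xv blk True)) 0) (enc2 (2 * z) 0)) (h @ hT) +
     1/2 * reach (mach K) w P T (n + length (concat (map enc_block bl))) (to_nat (P1 BlkEnd False)) (Suc (length pre + length (enc_block blk)))
       (V half (enc2 (c - real (xv blk False)) 0) (enc2 (2 * z) 0)) (h @ hF)" by blast
  have w2: "w = (pre @ enc_block blk) @ concat (map enc_block bl) @ post" using cons.prems(3) by simp
  have br: "avgF (length bl) (\<lambda>xs. F (t # xs)) \<le> reach (mach K) w P T (n + length (concat (map enc_block bl))) (to_nat (P1 BlkEnd t))
       (Suc (length pre + length (enc_block blk))) (V half (enc2 (c - real (xv blk t)) 0) (enc2 (2 * z) 0)) h'"
    if ht: "xs_of h' = xs_of h @ [t]" "nq h' = nq h" for t h'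
  proof -
    have hyp: "\<forall>xs h'' x'. length xs = length bl \<longrightarrow> xs_of h'' = xs_of h' @ xs \<longrightarrow> nq h'' = nq h' \<longrightarrow>
       F (t # xs) \<le> reach (mach K) w P T n (to_nat (P1 BlkEnd x')) (Suc (length (pre @ enc_block blk) + length (concat (map enc_block bl))))
         (V half (enc2 (c - real (xv blk t) - real (xsum bl xs)) 0) (enc2 (2 * z * 2 ^ length bl) 0)) h''"
    proof (intro allI impI)
      fix xs h'' x' assume a: "length xs = length bl" "xs_of h'' = xs_of h' @ xs" "nq h'' = nq h'"
      have "F (t # xs) \<le> reach (mach K) w P T n (to_nat (P1 BlkEnd x')) (Suc (length pre + length (concat (map enc_block (blk # bl)))))
         (V half (enc2 (c - real (xsum (blk # bl) (t # xs))) 0) (enc2 (z * 2 ^ length (blk # bl)) 0)) h''"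
        using cons.prems(4)[rule_format, of "t # xs" h'' x'] a ht by simp
      then show "F (t # xs) \<le> reach (mach K) w P T n (to_nat (P1 BlkEnd x')) (Suc (length (pre @ enc_block blk) + length (concat (map enc_block bl))))
         (V half (enc2 (c - real (xv blk t) - real (xsum bl xs)) 0) (enc2 (2 * z * 2 ^ length bl) 0)) h''"
        by (simp add: xsum_Cons algebra_simps)
    qed
    show ?thesis
      using cons.IH[where d=BlkEnd and pre="pre @ enc_block blk" and post=post and h=h' and F="\<lambda>xs. F (t # xs)" and x=t and c="c - real (xv blk t)" and z="2 * z", OF nb(2) _ w2 hyp]
      by simp
  qed
  have "avgF (length (blk # bl)) F = (avgF (length bl) (\<lambda>xs. F (True # xs)) + avgF (length bl) (\<lambda>xs. F (False # xs))) / 2"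
    by simp
  also have "\<dots> \<le> 1/2 * reach (mach K) w P T (n + length (concat (map enc_block bl))) (to_nat (P1 BlkEnd True)) (Suc (length pre + length (enc_block blk)))
       (V half (enc2 (c - real (xv blk True)) 0) (enc2 (2 * z) 0)) (h @ hT) +
     1/2 * reach (mach K) w P T (n + length (concat (map enc_block bl))) (to_nat (P1 BlkEnd False)) (Suc (length pre + length (enc_block blk)))
       (V half (enc2 (c - real (xv blk False)) 0) (enc2 (2 * z) 0)) (h @ hF)"
    using br[of "h @ hT" True] br[of "h @ hF" False] hh by simp
  also have "\<dots> = reach (mach K) w P T (n + length (concat (map enc_block (blk # bl)))) (to_nat (P1 d x)) (Suc (length pre)) (V half (enc2 c 0) (enc2 z 0)) h"
    using eq by (simp add: add.assoc add.commute[of "length (enc_block blk)"])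
  finally show ?case .
qed

lemma ysum_snoc: "ysum (bl @ [blk]) Y = ysum bl Y + yv blk (Y (length bl))"
  by (simp add: ysum_def nth_append)

lemma ysum_cong: "(\<And>i. i < length bl \<Longrightarrow> Y i = Y' i) \<Longrightarrow> ysum bl Y = ysum bl Y'"
  by (simp add: ysum_def)

lemma p2_blocks:
  assumes "\<forall>blk\<in>set bl. nonemp blk" "w = pre @ concat (map enc_block bl) @ post" "\<And>i. i \<ge> 5 \<Longrightarrow> zz i = 0"
  shows "\<exists>Y hs p'. xs_of (h @ hs) = xs_of h \<and> nq (h @ hs) = nq h + length bl \<and>
    (\<forall>Yh. (\<forall>h'. xs_of h' = xs_of h \<longrightarrow> P h' = (if Yh (nq h') then 0 else 1)) \<longrightarrow>
        (\<forall>i<length bl. Y i = Yh (nq h + length bl - 1 - i))) \<and>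
    reach (mach K) w P T (n + length (concat (map enc_block bl))) (to_nat Tn) (length pre + length (concat (map enc_block bl)))
      (V half (enc2 c p) zz) h =
    reach (mach K) w P T n (to_nat Tn) (length pre) (V half (enc2 (c - real (ysum bl Y)) p') zz) (h @ hs)"
  using assms(1,2)
proof (induction bl arbitrary: post c p h rule: rev_induct)
  case Nil
  show ?case by (rule exI[of _ "\<lambda>_. True"], rule exI[of _ "[]"], rule exI[of _ p]) (simp add: ysum_def)
next
  case (snoc blk bl)
  obtain a b e f where blk: "blk = (a, b, e, f)" by (cases blk) auto
  have ne: "a \<noteq> []" "b \<noteq> []" "e \<noteq> []" "f \<noteq> []" using snoc.prems(1) by (auto simp: nonemp_def blk)
  define u where "u = [All, LP] @ enc_bits a @ [Cm] @ enc_bits b @ [RP, Ex, LP] @ enc_bits e @ [Cm] @ enc_bits f"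
  have eb: "enc_block blk = u @ [RP]" by (simp add: u_def blk enc_block_eq)
  have ru: "rev u = tl (rev (enc_block blk))" by (simp add: eb)
  have une: "u \<noteq> []" by (simp add: u_def)
  define pre' where "pre' = pre @ concat (map enc_block bl)"
  have w1: "w = (pre' @ u) @ RP # post" using snoc.prems(2) eb by (simp add: pre'_def)
  have tp: "tape w (Suc (length (pre' @ u))) = Sym RP" using w1 by (rule tape_at)
  define ch where "ch = (P h = 0)"
  have st: "stp Tn (Sym RP) (P h) (\<lambda>_. 0) = (Tf1 ch, -1)" by (simp add: ch_def)
  have cs: "\<not> coinstep Tn RP" by simp
  have hs0: "half 0 + half 1 = 1" by (simp add: half_def)
  have opq: "opc Tn RP (c, p) = (c, 1)" by (simp add: opc_def affr_def)
  define h1 where "h1 = h @ [(to_nat (Tf1 ch), length pre' + length u, \<lambda>_. 0)]"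
  define m where "m = n + length (concat (map enc_block bl))"
  have q: "reach (mach K) w P T (Suc (m + length u)) (to_nat Tn) (Suc (length (pre' @ u))) (V half (enc2 c p) zz) h =
     reach (mach K) w P T (m + length u) (to_nat (Tf1 ch)) (length pre' + length u) (V half (enc2 c 1) zz) h1"
  proof -
    have e: "nat (int (Suc (length (pre' @ u))) + -1) = length pre' + length u" by simp
    show ?thesis
      using step_sym[where K=K and T=T and n="m + length u" and P=P and h=h and c=c and p=p and zz=zz, OF _ _ _ tp cs st hs0 assms(3)]
      unfolding e h1_def by (simp add: opq)
  qed
  have r2: "rn (Tf1 ch) (c, 1) (rev u) = Some (Tn, (c - real (yv blk ch), if ch then 2 ^ length e else 1))"
    unfolding ru blk using rn_blk2[OF ne, of ch c] by (simp add: yv_def)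
  have isT: "isT (Tf1 ch)" by (simp add: isT_def)
  have w2: "w = pre' @ u @ RP # post" using w1 by simp
  obtain hs1 where hs1: "\<forall>ob\<in>set hs1. nm ob"
    "reach (mach K) w P T (m + length u) (to_nat (Tf1 ch)) (length pre' + length u) (V half (enc2 c 1) zz) h1 =
     reach (mach K) w P T m (to_nat Tn) (length pre') (V half (enc2 (c - real (yv blk ch)) (if ch then 2 ^ length e else 1)) zz) (h1 @ hs1)"
    using runL[where K=K and P=P and T=T and n=m and h=h1 and zz=zz, OF r2 isT w2 hs0 assms(3)] une by auto
  have w3: "w = pre @ concat (map enc_block bl) @ (enc_block blk @ post)" using snoc.prems(2) by simp
  have nb: "\<forall>b\<in>set bl. nonemp b" using snoc.prems(1) by auto
  obtain Y' hs2 p2 where IH: "xs_of ((h1 @ hs1) @ hs2) = xs_of (h1 @ hs1)" "nq ((h1 @ hs1) @ hs2) = nq (h1 @ hs1) + length bl"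
    "\<forall>Yh. (\<forall>h'. xs_of h' = xs_of (h1 @ hs1) \<longrightarrow> P h' = (if Yh (nq h') then 0 else 1)) \<longrightarrow>
        (\<forall>i<length bl. Y' i = Yh (nq (h1 @ hs1) + length bl - 1 - i))"
    "reach (mach K) w P T m (to_nat Tn) (length pre + length (concat (map enc_block bl)))
      (V half (enc2 (c - real (yv blk ch)) (if ch then 2 ^ length e else 1)) zz) (h1 @ hs1) =
     reach (mach K) w P T n (to_nat Tn) (length pre) (V half (enc2 (c - real (yv blk ch) - real (ysum bl Y')) p2) zz) ((h1 @ hs1) @ hs2)"
    using snoc.IH[where post="enc_block blk @ post" and c="c - real (yv blk ch)" and p="if ch then 2 ^ length e else 1" and h="h1 @ hs1", OF nb w3]
    unfolding m_def by blast
  have hh1: "xs_of (h1 @ hs1) = xs_of h" "nq (h1 @ hs1) = Suc (nq h)"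
    using hist_nm[OF hs1(1), of h1] hist_q[of h ch "length pre' + length u" "\<lambda>_. 0"] unfolding h1_def by auto
  define Y where "Y = Y'(length bl := ch)"
  have ys: "ysum (bl @ [blk]) Y = ysum bl Y' + yv blk ch"
    by (simp add: ysum_snoc Y_def) (rule ysum_cong, simp)
  show ?case
  proof (intro exI[of _ Y] exI[of _ "(to_nat (Tf1 ch), length pre' + length u, \<lambda>_. 0) # hs1 @ hs2"] exI[of _ p2] conjI)
    show "xs_of (h @ ((to_nat (Tf1 ch), length pre' + length u, \<lambda>_. 0) # hs1 @ hs2)) = xs_of h" using IH(1) hh1 by (simp add: h1_def)
    show "nq (h @ ((to_nat (Tf1 ch), length pre' + length u, \<lambda>_. 0) # hs1 @ hs2)) = nq h + length (bl @ [blk])" using IH(2) hh1 by (simp add: h1_def)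
    show "\<forall>Yh. (\<forall>h'. xs_of h' = xs_of h \<longrightarrow> P h' = (if Yh (nq h') then 0 else 1)) \<longrightarrow>
        (\<forall>i<length (bl @ [blk]). Y i = Yh (nq h + length (bl @ [blk]) - 1 - i))"
    proof (intro allI impI)
      fix Yh i assume H: "\<forall>h'. xs_of h' = xs_of h \<longrightarrow> P h' = (if Yh (nq h') then 0 else 1)" and i: "i < length (bl @ [blk])"
      show "Y i = Yh (nq h + length (bl @ [blk]) - 1 - i)"
      proof (cases "i = length bl")
        case True
        have "P h = (if Yh (nq h) then 0 else 1)" using H by simp
        then show ?thesis using True by (simp add: Y_def ch_def)
      next
        case False
        then have "i < length bl" using i by simp
        moreover have "Y' i = Yh (nq (h1 @ hs1) + length bl - 1 - i)" using IH(3) H hh1 \<open>i < length bl\<close> by simp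
        ultimately show ?thesis using hh1 False by (simp add: Y_def)
      qed
    qed
    show "reach (mach K) w P T (n + length (concat (map enc_block (bl @ [blk])))) (to_nat Tn)
      (length pre + length (concat (map enc_block (bl @ [blk])))) (V half (enc2 c p) zz) h =
      reach (mach K) w P T n (to_nat Tn) (length pre) (V half (enc2 (c - real (ysum (bl @ [blk]) Y)) p2) zz)
      (h @ ((to_nat (Tf1 ch), length pre' + length u, \<lambda>_. 0) # hs1 @ hs2))"
    proof -
      have e1: "n + length (concat (map enc_block (bl @ [blk]))) = Suc (m + length u)" by (simp add: m_def eb)
      have e2: "length pre + length (concat (map enc_block (bl @ [blk]))) = Suc (length (pre' @ u))" by (simp add: pre'_def eb)
      have "reach (mach K) w P T (n + length (concat (map enc_block (bl @ [blk])))) (to_nat Tn)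
         (length pre + length (concat (map enc_block (bl @ [blk])))) (V half (enc2 c p) zz) h =
         reach (mach K) w P T (Suc (m + length u)) (to_nat Tn) (Suc (length (pre' @ u))) (V half (enc2 c p) zz) h"
        by (simp only: e1 e2)
      also have "\<dots> = reach (mach K) w P T (m + length u) (to_nat (Tf1 ch)) (length pre' + length u) (V half (enc2 c 1) zz) h1"
        by (rule q)
      also have "\<dots> = reach (mach K) w P T m (to_nat Tn) (length pre') (V half (enc2 (c - real (yv blk ch)) (if ch then 2 ^ length e else 1)) zz) (h1 @ hs1)"
        by (rule hs1(2))
      also have "\<dots> = reach (mach K) w P T n (to_nat Tn) (length pre) (V half (enc2 (c - real (yv blk ch) - real (ysum bl Y')) p2) zz) ((h1 @ hs1) @ hs2)"
        using IH(4) unfolding pre'_def by (simp del: reach.simps)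
      also have "\<dots> = reach (mach K) w P T n (to_nat Tn) (length pre) (V half (enc2 (c - real (ysum (bl @ [blk]) Y)) p2) zz)
         (h @ (to_nat (Tf1 ch), length pre' + length u, \<lambda>_. 0) # hs1 @ hs2)"
        using ys by (simp add: h1_def algebra_simps del: reach.simps)
      finally show ?thesis .
    qed
  qed
qed

definition Good :: "prover \<Rightarrow> nat \<Rightarrow> bool list \<Rightarrow> (nat \<Rightarrow> bool) \<Rightarrow> bool" where
  "Good P m xs Y \<longleftrightarrow> (\<forall>Yh. (\<forall>h''. xs_of h'' = xs \<longrightarrow> P h'' = (if Yh (nq h'') then 0 else 1)) \<longrightarrow>
      (\<forall>i<m. Y i = Yh (m - 1 - i)))"

lemma round_core:
  assumes w: "w = enc_bits S @ concat (map enc_block bl)" and S: "S \<noteq> []" and bl: "bl \<noteq> []"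
    and ne: "\<forall>blk\<in>set bl. nonemp blk"
    and a: "a 0 + a 1 = 1" "(\<Sum>k<5. b k) = 1" "(\<Sum>k<5. zz k) = 1"
    and h: "xs_of h = []" "nq h = 0"
    and hyp: "\<forall>xs Y h'. length xs = length bl \<longrightarrow> xs_of h' = xs \<longrightarrow> nq h' = length bl \<longrightarrow> Good P (length bl) xs Y \<longrightarrow>
       F xs \<le> reach (mach K) w P T n (to_nat TS) 0
         (V half (enc2 (real (bits_val S) - real (xsum bl xs) - real (ysum bl Y)) 0) (enc2 (real K * 2 ^ length bl) 0)) h'"
  shows "avgF (length bl) F \<le> reach (mach K) w P T (n + (2 * length w + 2)) (to_nat Start) 0 (V a b zz) h"
proof -
  define C where "C = concat (map enc_block bl)"
  have lw: "length w = length S + length C" by (simp add: w C_def)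
  define h1 where "h1 = h @ [(to_nat (P1 S0 False), 1, \<lambda>_. 0::nat)]"
  have nm1: "nm (to_nat (P1 S0 False), 1, \<lambda>_. 0::nat)" by (auto simp: nm_def markers_def)
  have hh1: "xs_of h1 = []" "nq h1 = 0" using hist_nm1[OF nm1, of h] h by (auto simp: h1_def)
  have e0: "n + (2 * length w + 2) = Suc (n + 1 + length C + length C + length S + length S)" by (simp add: lw)
  have st: "reach (mach K) w P T (n + (2 * length w + 2)) (to_nat Start) 0 (V a b zz) h =
    reach (mach K) w P T (n + 1 + length C + length C + length S + length S) (to_nat (P1 S0 False)) 1 (V half (enc2 0 0) (enc2 (real K) 0)) h1"
    unfolding e0 h1_def by (rule start_step[OF a])
  have w1: "w = [] @ enc_bits S @ C" by (simp add: w C_def)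
  have r1: "rn (P1 S0 False) (0, 0) (enc_bits S) = Some (P1 S1 False, (real (bits_val S), 0))"
    using rn_S0[OF S, of False 0 0] by simp
  have hz: "\<And>i. i \<ge> 5 \<Longrightarrow> enc2 (real K) 0 i = 0" by (simp add: enc2_hi)
  obtain hs1 where hs1: "\<forall>ob\<in>set hs1. nm ob"
    "reach (mach K) w P T (n + 1 + length C + length C + length S + length S) (to_nat (P1 S0 False)) 1 (V half (enc2 0 0) (enc2 (real K) 0)) h1 =
     reach (mach K) w P T (n + 1 + length C + length C + length S) (to_nat (P1 S1 False)) (Suc (length S)) (V half (enc2 (real (bits_val S)) 0) (enc2 (real K) 0)) (h1 @ hs1)"
    using runR[where K=K and P=P and T=T and n="n + 1 + length C + length C + length S" and h=h1 and zz="enc2 (real K) 0", OF r1 w1 half_sum hz] S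
    by (auto simp: add.assoc)
  have hh2: "xs_of (h1 @ hs1) = []" "nq (h1 @ hs1) = 0" using hist_nm[OF hs1(1), of h1] hh1 by auto
  have w2: "w = enc_bits S @ concat (map enc_block bl) @ []" by (simp add: w)
  have cont: "\<forall>xs h' x'. length xs = length bl \<longrightarrow> xs_of h' = xs_of (h1 @ hs1) @ xs \<longrightarrow> nq h' = nq (h1 @ hs1) \<longrightarrow>
       F xs \<le> reach (mach K) w P T (n + 1 + length C + length S) (to_nat (P1 BlkEnd x'))
         (Suc (length (enc_bits S) + length (concat (map enc_block bl))))
         (V half (enc2 (real (bits_val S) - real (xsum bl xs)) 0) (enc2 (real K * 2 ^ length bl) 0)) h'"
  proof (intro allI impI)
    fix xs h' x' assume x: "length xs = length bl" "xs_of h' = xs_of (h1 @ hs1) @ xs" "nq h' = nq (h1 @ hs1)"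
    define cc where "cc = real (bits_val S) - real (xsum bl xs)"
    define zz2 where "zz2 = enc2 (real K * 2 ^ length bl) 0"
    have hz2: "\<And>i. i \<ge> 5 \<Longrightarrow> zz2 i = 0" by (simp add: enc2_hi zz2_def)
    have tpe: "tape w (Suc (length w)) = REnd" by (rule tape_end)
    define h2 where "h2 = h' @ [(to_nat Tn, length w, \<lambda>_. 0::nat)]"
    have nm2: "nm (to_nat Tn, length w, \<lambda>_. 0::nat)" by (auto simp: nm_def markers_def)
    have hh3: "xs_of h2 = xs" "nq h2 = 0" using hist_nm1[OF nm2, of h'] x hh2 by (auto simp: h2_def)
    have rs: "reach (mach K) w P T (n + 1 + length C + length S) (to_nat (P1 BlkEnd x')) (Suc (length w)) (V half (enc2 cc 0) zz2) h' =
       reach (mach K) w P T (n + length S + length C) (to_nat Tn) (length w) (V half (enc2 cc 0) zz2) h2"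
    proof -
      have e: "n + 1 + length C + length S = Suc (n + length S + length C)" by simp
      have R: "reach (mach K) w P T (Suc (n + length S + length C)) (to_nat (P1 BlkEnd x')) (Suc (length w)) (V half (enc2 cc 0) zz2) h' =
        reach (mach K) w P T (n + length S + length C) (to_nat Tn) (Suc (length w) - 1) (V half (enc2 cc 0) zz2)
          (h' @ [(to_nat Tn, Suc (length w) - 1, \<lambda>_. 0)])"
        by (rule rend_step[where x=x' and K=K and P=P and T=T and n="n + length S + length C" and h=h' and b="enc2 cc 0" and zz=zz2, OF tpe _ half_sum enc2_hi hz2]) simp_all
      show ?thesis unfolding e R diff_Suc_1 h2_def ..
    qed
    obtain Y hs p' where p2: "xs_of (h2 @ hs) = xs_of h2" "nq (h2 @ hs) = nq h2 + length bl"
      "\<forall>Yh. (\<forall>h'. xs_of h' = xs_of h2 \<longrightarrow> P h' = (if Yh (nq h') then 0 else 1)) \<longrightarrow>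
        (\<forall>i<length bl. Y i = Yh (nq h2 + length bl - 1 - i))"
      "reach (mach K) w P T (n + length S + length (concat (map enc_block bl))) (to_nat Tn) (length (enc_bits S) + length (concat (map enc_block bl)))
        (V half (enc2 cc 0) zz2) h2 =
       reach (mach K) w P T (n + length S) (to_nat Tn) (length (enc_bits S)) (V half (enc2 (cc - real (ysum bl Y)) p') zz2) (h2 @ hs)"
      using p2_blocks[where K=K and P=P and T=T and n="n + length S" and h=h2 and c=cc and p=0 and zz=zz2, OF ne w2 hz2]
      by blast
    have r3: "rn Tn (cc - real (ysum bl Y), p') (rev (enc_bits S)) = Some (TS, (cc - real (ysum bl Y), 0))"
      by (rule rn_Tn_S[OF S])
    have isTn: "isT Tn" by (simp add: isT_def)
    obtain hs4 where hs4: "\<forall>ob\<in>set hs4. nm ob"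
      "reach (mach K) w P T (n + length S) (to_nat Tn) (length (enc_bits S)) (V half (enc2 (cc - real (ysum bl Y)) p') zz2) (h2 @ hs) =
       reach (mach K) w P T n (to_nat TS) 0 (V half (enc2 (cc - real (ysum bl Y)) 0) zz2) ((h2 @ hs) @ hs4)"
      using runL[where K=K and P=P and T=T and n=n and h="h2 @ hs" and zz=zz2, OF r3 isTn w1 half_sum hz2] S
      by auto
    have hh4: "xs_of ((h2 @ hs) @ hs4) = xs" "nq ((h2 @ hs) @ hs4) = length bl"
      using hist_nm[OF hs4(1), of "h2 @ hs"] p2(1,2) hh3 by auto
    have good: "Good P (length bl) xs Y" unfolding Good_def using p2(3) hh3 by simp
    have "F xs \<le> reach (mach K) w P T n (to_nat TS) 0 (V half (enc2 (cc - real (ysum bl Y)) 0) zz2) ((h2 @ hs) @ hs4)"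
      using hyp[rule_format, OF x(1) hh4 good] by (simp add: cc_def zz2_def del: reach.simps)
    also have "\<dots> = reach (mach K) w P T (n + length S) (to_nat Tn) (length (enc_bits S)) (V half (enc2 (cc - real (ysum bl Y)) p') zz2) (h2 @ hs)"
      by (rule hs4(2)[symmetric])
    also have "\<dots> = reach (mach K) w P T (n + length S + length (concat (map enc_block bl))) (to_nat Tn) (length (enc_bits S) + length (concat (map enc_block bl)))
        (V half (enc2 cc 0) zz2) h2"
      by (rule p2(4)[symmetric])
    also have "\<dots> = reach (mach K) w P T (n + length S + length C) (to_nat Tn) (length w) (V half (enc2 cc 0) zz2) h2"
      by (simp only: C_def[symmetric] length_enc_bits lw)
    also have "\<dots> = reach (mach K) w P T (n + 1 + length C + length S) (to_nat (P1 BlkEnd x')) (Suc (length w)) (V half (enc2 cc 0) zz2) h'"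
      by (rule rs[symmetric])
    finally show "F xs \<le> reach (mach K) w P T (n + 1 + length C + length S) (to_nat (P1 BlkEnd x'))
         (Suc (length (enc_bits S) + length (concat (map enc_block bl))))
         (V half (enc2 (real (bits_val S) - real (xsum bl xs)) 0) (enc2 (real K * 2 ^ length bl) 0)) h'"
      by (simp only: cc_def zz2_def C_def[symmetric] length_enc_bits lw)
  qed
  have "avgF (length bl) F \<le> reach (mach K) w P T (n + 1 + length C + length S + length (concat (map enc_block bl))) (to_nat (P1 S1 False))
      (Suc (length (enc_bits S))) (V half (enc2 (real (bits_val S)) 0) (enc2 (real K) 0)) (h1 @ hs1)"
    by (rule p1_blocks[OF bl ne _ w2 cont]) simp
  also have "\<dots> = reach (mach K) w P T (n + 1 + length C + length C + length S) (to_nat (P1 S1 False))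
      (Suc (length S)) (V half (enc2 (real (bits_val S)) 0) (enc2 (real K) 0)) (h1 @ hs1)"
  proof -
    have eq: "n + 1 + length C + length S + length (concat (map enc_block bl)) = n + 1 + length C + length C + length S"
      by (simp add: C_def)
    show ?thesis by (simp only: eq length_enc_bits)
  qed
  also have "\<dots> = reach (mach K) w P T (n + 1 + length C + length C + length S + length S) (to_nat (P1 S0 False)) 1 (V half (enc2 0 0) (enc2 (real K) 0)) h1"
    by (rule hs1(2)[symmetric])
  also have "\<dots> = reach (mach K) w P T (n + (2 * length w + 2)) (to_nat Start) 0 (V a b zz) h"
    by (rule st[symmetric])
  finally show ?thesis .
qed

lemma avg_all: "(\<forall>xs. length xs = m \<longrightarrow> L \<le> F xs) \<Longrightarrow> L \<le> avgF m F"
proof (induction m arbitrary: F)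
  case 0 then show ?case by simp
next
  case (Suc m)
  have "L \<le> avgF m (\<lambda>xs. F (True # xs))" "L \<le> avgF m (\<lambda>xs. F (False # xs))"
    using Suc.IH Suc.prems by auto
  then show ?case by simp
qed

lemma avg_bad: "length xs0 = m \<Longrightarrow> (\<forall>xs. length xs = m \<longrightarrow> Lg \<le> F xs) \<Longrightarrow> Lb \<le> F xs0 \<Longrightarrow> Lg \<le> Lb \<Longrightarrow>
   Lg + (Lb - Lg) / 2 ^ m \<le> avgF m F"
proof (induction m arbitrary: F xs0)
  case 0 then show ?case by simp
next
  case (Suc m)
  obtain b xs1 where xs0: "xs0 = b # xs1" "length xs1 = m" using Suc.prems(1) by (cases xs0) auto
  have good: "Lg + (Lb - Lg) / 2 ^ m \<le> avgF m (\<lambda>xs. F (b # xs))"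
    using Suc.IH[of xs1 "\<lambda>xs. F (b # xs)"] xs0 Suc.prems by auto
  have other: "Lg \<le> avgF m (\<lambda>xs. F ((\<not> b) # xs))"
    using avg_all[of m Lg "\<lambda>xs. F ((\<not> b) # xs)"] Suc.prems by auto
  have "Lg + (Lb - Lg) / 2 ^ Suc m = ((Lg + (Lb - Lg) / 2 ^ m) + Lg) / 2" by (simp add: field_simps)
  also have "\<dots> \<le> (avgF m (\<lambda>xs. F (b # xs)) + avgF m (\<lambda>xs. F ((\<not> b) # xs))) / 2"
    by (intro divide_right_mono add_mono good other) simp
  also have "\<dots> = avgF (Suc m) F" by (cases b) simp_all
  finally show ?case .
qed

lemma kg_sum: "(\<Sum>i<length bl. case bl ! i of (a, b, e, f) \<Rightarrow>
    (if x i then bits_val a else bits_val b) + (if y i then bits_val e else bits_val f)) =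
    xsum bl (map x [0..<length bl]) + ysum bl y"
proof -
  have "(\<Sum>i<length bl. case bl ! i of (a, b, e, f) \<Rightarrow>
    (if x i then bits_val a else bits_val b) + (if y i then bits_val e else bits_val f)) =
    (\<Sum>i<length bl. xv (bl ! i) (x i) + yv (bl ! i) (y i))"
    by (intro sum.cong refl) (auto simp: xv_def yv_def split: prod.splits)
  also have "\<dots> = xsum bl (map x [0..<length bl]) + ysum bl y"
    by (simp add: sum.distrib xsum_def ysum_def)
  finally show ?thesis .
qed

lemma int_ne0: "(c::real) = real a - real b - real d \<Longrightarrow> c \<noteq> 0 \<Longrightarrow> \<bar>c\<bar> \<ge> 1"
proof -
  assume c: "c = real a - real b - real d" "c \<noteq> 0"
  have "c = real_of_int (int a - int b - int d)" using c by simp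
  moreover have k: "int a - int b - int d \<noteq> 0" using c by auto
  then have "\<bar>int a - int b - int d\<bar> \<ge> 1" by linarith
  then have "real_of_int \<bar>int a - int b - int d\<bar> \<ge> 1" by linarith
  ultimately show ?thesis by simp
qed

definition stcond :: "(nat \<Rightarrow> real) \<Rightarrow> (nat \<Rightarrow> real) \<Rightarrow> (nat \<Rightarrow> real) \<Rightarrow> obs list \<Rightarrow> bool" where
  "stcond a b zz h \<longleftrightarrow> a 0 + a 1 = 1 \<and> (\<Sum>k<5. b k) = 1 \<and> (\<Sum>k<5. zz k) = 1 \<and> xs_of h = [] \<and> nq h = 0"

definition wfin :: "bool list \<Rightarrow> blk list \<Rightarrow> bool" where
  "wfin S bl \<longleftrightarrow> S \<noteq> [] \<and> bl \<noteq> [] \<and> (\<forall>blk\<in>set bl. nonemp blk)"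

lemma acc_lower:
  assumes "\<forall>a b zz h. stcond a b zz h \<longrightarrow> B \<le> reach (mach K) w P T (Suc n0) (to_nat Start) 0 (V a b zz) h"
    and "z \<ge> 0"
  shows "(1 / (2 * z + 1)) * (if to_nat Acc \<in> T then 1 else 0) + (2 * z / (2 * z + 1)) * B \<le>
    reach (mach K) w P T (Suc (Suc n0)) (to_nat AccCoin) 0 (V half (enc2 0 0) (enc2 z 0)) h"
proof -
  have hz: "\<And>i. i \<ge> 5 \<Longrightarrow> enc2 0 0 i = 0" by (simp add: enc2_hi)
  have R: "B \<le> reach (mach K) w P T (Suc n0) (to_nat Start) 0 (V half (enc2 0 0) (ee j)) (h @ [(to_nat Start, 0, ou)])"
    if "j < 2" for j ou
  proof -
    have "stcond half (enc2 0 0) (ee j) (h @ [(to_nat Start, 0, ou)])"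
      unfolding stcond_def using half_sum sum_enc2 sum_ee[of j] that hist_start by auto
    then show ?thesis using assms(1) by blast
  qed
  have "(1 / (2 * z + 1)) * (if to_nat Acc \<in> T then 1 else 0) + (2 * z / (2 * z + 1)) * B =
        (1 / (2 * z + 1)) * (if to_nat Acc \<in> T then 1 else 0) + (z / (2 * z + 1)) * (B + B)"
    by (simp add: field_simps)
  also have "\<dots> \<le> (1 / (2 * \<bar>z\<bar> + 1)) * (if to_nat Acc \<in> T then 1 else 0) +
    (\<bar>z\<bar> / (2 * \<bar>z\<bar> + 1)) * (reach (mach K) w P T (Suc n0) (to_nat Start) 0 (V half (enc2 0 0) (ee 0))
       (h @ [(to_nat Start, 0, (\<lambda>_. 0)(2 := 0))]) +
     reach (mach K) w P T (Suc n0) (to_nat Start) 0 (V half (enc2 0 0) (ee 1))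
       (h @ [(to_nat Start, 0, (\<lambda>_. 0)(2 := 1))]))"
  proof -
    have s: "B + B \<le> reach (mach K) w P T (Suc n0) (to_nat Start) 0 (V half (enc2 0 0) (ee 0))
       (h @ [(to_nat Start, 0, (\<lambda>_. 0)(2 := 0))]) +
     reach (mach K) w P T (Suc n0) (to_nat Start) 0 (V half (enc2 0 0) (ee 1))
       (h @ [(to_nat Start, 0, (\<lambda>_. 0)(2 := 1))])"
      by (intro add_mono R) auto
    have "(z / (2 * z + 1)) * (B + B) \<le> (z / (2 * z + 1)) * (reach (mach K) w P T (Suc n0) (to_nat Start) 0 (V half (enc2 0 0) (ee 0))
       (h @ [(to_nat Start, 0, (\<lambda>_. 0)(2 := 0))]) +
     reach (mach K) w P T (Suc n0) (to_nat Start) 0 (V half (enc2 0 0) (ee 1))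
       (h @ [(to_nat Start, 0, (\<lambda>_. 0)(2 := 1))]))"
      by (rule mult_left_mono[OF s]) (simp add: assms(2))
    then show ?thesis using assms(2) by (simp del: reach.simps)
  qed
  also have "\<dots> = reach (mach K) w P T (Suc (Suc n0)) (to_nat AccCoin) 0 (V half (enc2 0 0) (enc2 z 0)) h"
    by (rule acc_step[OF half_sum hz, symmetric])
  finally show ?thesis .
qed

lemma test_lower_rej:
  assumes "\<forall>h'. L \<le> reach (mach K) w P (rejs (mach K)) (Suc (Suc n0)) (to_nat AccCoin) 0 (V half (enc2 0 0) zz) h'"
    and "L \<le> 1" "\<And>i. i \<ge> 5 \<Longrightarrow> zz i = 0" "\<bar>c\<bar> \<ge> 1"
  shows "2/3 + L/3 \<le> reach (mach K) w P (rejs (mach K)) (Suc (Suc (Suc n0))) (to_nat TS) 0 (V half (enc2 c 0) zz) h"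
proof -
  define t where "t = 1 / (2 * \<bar>c\<bar> + 1)"
  define A where "A = reach (mach K) w P (rejs (mach K)) (Suc (Suc n0)) (to_nat AccCoin) 0 (V half (enc2 0 0) zz)
       (h @ [(to_nat AccCoin, 0, (\<lambda>_. 0)(1 := 4))])"
  have eq: "reach (mach K) w P (rejs (mach K)) (Suc (Suc (Suc n0))) (to_nat TS) 0 (V half (enc2 c 0) zz) h =
     (2 * \<bar>c\<bar> / (2 * \<bar>c\<bar> + 1)) * 1 + t * A"
    unfolding t_def A_def using test_step[where K=K and w=w and P=P and T="rejs (mach K)" and m="Suc n0" and c=c and h=h and zz=zz, OF half_sum assms(3)] by (simp add: mach_def)
  have e1: "2 * \<bar>c\<bar> / (2 * \<bar>c\<bar> + 1) = 1 - t" unfolding t_def by (simp add: field_simps)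
  have t0: "0 \<le> t" "t \<le> 1/3" unfolding t_def using assms(4) by (auto simp: field_simps)
  have LA: "L \<le> A" unfolding A_def using assms(1) by blast
  have m1: "t * L \<le> t * A" using t0 LA by (simp add: mult_left_mono)
  have m2: "0 \<le> (1/3 - t) * (1 - L)" using t0 assms(2) by (intro mult_nonneg_nonneg) auto
  have "(1/3 - t) * (1 - L) = 1/3 - L/3 - t + t * L" by (simp add: field_simps)
  then have m3: "0 \<le> 1/3 - L/3 - t + t * L" using m2 by linarith
  show ?thesis unfolding eq e1 using m1 m3 by argo
qed

lemma test_lower0:
  assumes "\<forall>h'. L \<le> reach (mach K) w P T (Suc (Suc n0)) (to_nat AccCoin) 0 (V half (enc2 0 0) zz) h'"
    and "\<And>i. i \<ge> 5 \<Longrightarrow> zz i = 0"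
  shows "L \<le> reach (mach K) w P T (Suc (Suc (Suc n0))) (to_nat TS) 0 (V half (enc2 0 0) zz) h"
  using test_step[where K=K and w=w and P=P and T=T and m="Suc n0" and c=0 and h=h and zz=zz, OF half_sum assms(2)] assms(1) by (simp del: reach.simps)

lemma sound_round:
  assumes w: "w = enc_bits S @ concat (map enc_block bl)" and wf: "wfin S bl" and nk: "\<not> kg_true S bl"
    and B: "0 \<le> B" "B \<le> 1"
    and hyp: "\<forall>a b zz h. stcond a b zz h \<longrightarrow> B \<le> reach (mach K) w P (rejs (mach K)) (Suc n0) (to_nat Start) 0 (V a b zz) h"
    and st: "stcond a b zz h"
  shows "(2/3) / 2 ^ length bl + (1 - (2/3) / 2 ^ length bl) * ((2 * (real K * 2 ^ length bl) / (2 * (real K * 2 ^ length bl) + 1)) * B)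
     \<le> reach (mach K) w P (rejs (mach K)) (Suc (Suc (Suc n0)) + (2 * length w + 2)) (to_nat Start) 0 (V a b zz) h"
proof -
  define m where "m = length bl"
  define z where "z = real K * 2 ^ m"
  define L where "L = (2 * z / (2 * z + 1)) * B"
  have z0: "z \<ge> 0" by (simp add: z_def)
  have L1: "L \<le> 1" "0 \<le> L"
  proof -
    have "2 * z / (2 * z + 1) \<le> 1" "0 \<le> 2 * z / (2 * z + 1)" using z0 by auto
    then show "L \<le> 1" "0 \<le> L" unfolding L_def using B
      by (simp_all only: mult_le_one mult_nonneg_nonneg)
  qed
  have zz: "\<And>i. i \<ge> 5 \<Longrightarrow> enc2 z 0 i = 0" by (simp add: enc2_hi)
  have AL: "\<forall>h'. L \<le> reach (mach K) w P (rejs (mach K)) (Suc (Suc n0)) (to_nat AccCoin) 0 (V half (enc2 0 0) (enc2 z 0)) h'"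
  proof
    fix h'
    show "L \<le> reach (mach K) w P (rejs (mach K)) (Suc (Suc n0)) (to_nat AccCoin) 0 (V half (enc2 0 0) (enc2 z 0)) h'"
      using acc_lower[OF hyp z0, of h'] by (simp add: L_def mach_def del: reach.simps)
  qed
  from nk obtain x where x: "\<forall>y. bits_val S \<noteq> (\<Sum>i<length bl. case bl ! i of (a, b, e, f) \<Rightarrow>
        (if x i then bits_val a else bits_val b) + (if y i then bits_val e else bits_val f))"
    unfolding kg_true_def by blast
  define xs0 where "xs0 = map x [0..<m]"
  have bad: "bits_val S \<noteq> xsum bl xs0 + ysum bl Y" for Y
    using x[rule_format, of Y] kg_sum[where bl=bl and x=x and y=Y] by (simp add: xs0_def m_def)
  define F where "F = (\<lambda>xs. if xs = xs0 then 2/3 + L/3 else L)"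
  have core: "avgF m F \<le> reach (mach K) w P (rejs (mach K)) (Suc (Suc (Suc n0)) + (2 * length w + 2)) (to_nat Start) 0 (V a b zz) h"
    unfolding m_def
  proof (rule round_core[OF w])
    show "S \<noteq> []" "bl \<noteq> []" "\<forall>blk\<in>set bl. nonemp blk" using wf by (auto simp: wfin_def)
    show "a 0 + a 1 = 1" "(\<Sum>k<5. b k) = 1" "(\<Sum>k<5. zz k) = 1" "xs_of h = []" "nq h = 0"
      using st by (auto simp: stcond_def)
    show "\<forall>xs Y h'. length xs = length bl \<longrightarrow> xs_of h' = xs \<longrightarrow> nq h' = length bl \<longrightarrow> Good P (length bl) xs Y \<longrightarrow>
       F xs \<le> reach (mach K) w P (rejs (mach K)) (Suc (Suc (Suc n0))) (to_nat TS) 0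
         (V half (enc2 (real (bits_val S) - real (xsum bl xs) - real (ysum bl Y)) 0) (enc2 (real K * 2 ^ length bl) 0)) h'"
    proof (intro allI impI)
      fix xs Y h'
      define c where "c = real (bits_val S) - real (xsum bl xs) - real (ysum bl Y)"
      have zeq: "real K * 2 ^ length bl = z" by (simp add: z_def m_def)
      have c1: "c \<noteq> 0 \<Longrightarrow> \<bar>c\<bar> \<ge> 1" using int_ne0[of c] c_def by blast
      have lo1: "c \<noteq> 0 \<Longrightarrow> 2/3 + L/3 \<le> reach (mach K) w P (rejs (mach K)) (Suc (Suc (Suc n0))) (to_nat TS) 0 (V half (enc2 c 0) (enc2 z 0)) h'"
        using test_lower_rej[OF AL L1(1) zz c1] by blast
      have lo0: "c = 0 \<Longrightarrow> L \<le> reach (mach K) w P (rejs (mach K)) (Suc (Suc (Suc n0))) (to_nat TS) 0 (V half (enc2 c 0) (enc2 z 0)) h'"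
        using test_lower0[OF AL zz] by blast
      have "F xs \<le> reach (mach K) w P (rejs (mach K)) (Suc (Suc (Suc n0))) (to_nat TS) 0 (V half (enc2 c 0) (enc2 z 0)) h'"
      proof (cases "xs = xs0")
        case True
        have "real (bits_val S) \<noteq> real (xsum bl xs0) + real (ysum bl Y)"
          using bad[of Y] by (metis of_nat_add of_nat_eq_iff)
        then have "c \<noteq> 0" unfolding c_def True by argo
        then show ?thesis using lo1 True by (simp add: F_def)
      next
        case False
        then show ?thesis using lo1 lo0 L1 by (cases "c = 0") (auto simp: F_def)
      qed
      then show "F xs \<le> reach (mach K) w P (rejs (mach K)) (Suc (Suc (Suc n0))) (to_nat TS) 0
         (V half (enc2 (real (bits_val S) - real (xsum bl xs) - real (ysum bl Y)) 0) (enc2 (real K * 2 ^ length bl) 0)) h'"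
        unfolding c_def zeq .
    qed
  qed
  have "L + (2/3 + L/3 - L) / 2 ^ m \<le> avgF m F"
    by (rule avg_bad) (use L1 in \<open>auto simp: F_def xs0_def\<close>)
  moreover have "L + (2/3 + L/3 - L) / 2 ^ m = (2/3) / 2 ^ m + (1 - (2/3) / 2 ^ m) * L"
    by (simp add: field_simps)
  ultimately show ?thesis using core by (simp add: L_def z_def m_def del: reach.simps)
qed

definition yh :: "bool list \<Rightarrow> blk list \<Rightarrow> bool list \<Rightarrow> nat \<Rightarrow> bool" where
  "yh S bl xs = (SOME y. bits_val S = (\<Sum>i<length bl. case bl ! i of (a, b, e, f) \<Rightarrow>
        (if xs ! i then bits_val a else bits_val b) + (if y i then bits_val e else bits_val f)))"

definition Ph :: "bool list \<Rightarrow> blk list \<Rightarrow> prover" where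
  "Ph S bl h = (if yh S bl (xs_of h) (length bl - 1 - nq h) then 0 else 1)"

lemma yh_ok: "kg_true S bl \<Longrightarrow> length xs = length bl \<Longrightarrow> bits_val S = xsum bl xs + ysum bl (yh S bl xs)"
proof -
  assume kg: "kg_true S bl" and l: "length xs = length bl"
  have "\<exists>y. bits_val S = (\<Sum>i<length bl. case bl ! i of (a, b, e, f) \<Rightarrow>
        (if xs ! i then bits_val a else bits_val b) + (if y i then bits_val e else bits_val f))"
    using kg unfolding kg_true_def by (rule allE[of _ "\<lambda>i. xs ! i"]) simp
  then have "bits_val S = (\<Sum>i<length bl. case bl ! i of (a, b, e, f) \<Rightarrow>
        (if xs ! i then bits_val a else bits_val b) + (if yh S bl xs i then bits_val e else bits_val f))"
    unfolding yh_def by (rule someI_ex)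
  also have "\<dots> = xsum bl (map (\<lambda>i. xs ! i) [0..<length bl]) + ysum bl (yh S bl xs)"
    by (rule kg_sum)
  also have "map (\<lambda>i. xs ! i) [0..<length bl] = xs" using l map_nth[of xs] by simp
  finally show ?thesis .
qed

lemma comp_round:
  assumes w: "w = enc_bits S @ concat (map enc_block bl)" and wf: "wfin S bl" and kg: "kg_true S bl"
    and B: "0 \<le> B"
    and hyp: "\<forall>a b zz h. stcond a b zz h \<longrightarrow> B \<le> reach (mach K) w (Ph S bl) (accs (mach K)) (Suc n0) (to_nat Start) 0 (V a b zz) h"
    and st: "stcond a b zz h"
  shows "(1 / (2 * (real K * 2 ^ length bl) + 1)) + (2 * (real K * 2 ^ length bl) / (2 * (real K * 2 ^ length bl) + 1)) * B
     \<le> reach (mach K) w (Ph S bl) (accs (mach K)) (Suc (Suc (Suc n0)) + (2 * length w + 2)) (to_nat Start) 0 (V a b zz) h"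
proof -
  define m where "m = length bl"
  define z where "z = real K * 2 ^ m"
  define L where "L = (1 / (2 * z + 1)) + (2 * z / (2 * z + 1)) * B"
  have z0: "z \<ge> 0" by (simp add: z_def)
  have zz: "\<And>i. i \<ge> 5 \<Longrightarrow> enc2 z 0 i = 0" by (simp add: enc2_hi)
  have AL: "\<forall>h'. L \<le> reach (mach K) w (Ph S bl) (accs (mach K)) (Suc (Suc n0)) (to_nat AccCoin) 0 (V half (enc2 0 0) (enc2 z 0)) h'"
  proof
    fix h'
    show "L \<le> reach (mach K) w (Ph S bl) (accs (mach K)) (Suc (Suc n0)) (to_nat AccCoin) 0 (V half (enc2 0 0) (enc2 z 0)) h'"
      using acc_lower[OF hyp z0, of h'] by (simp add: L_def mach_def del: reach.simps)
  qed
  have core: "avgF m (\<lambda>_. L) \<le> reach (mach K) w (Ph S bl) (accs (mach K)) (Suc (Suc (Suc n0)) + (2 * length w + 2)) (to_nat Start) 0 (V a b zz) h"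
    unfolding m_def
  proof (rule round_core[OF w])
    show "S \<noteq> []" "bl \<noteq> []" "\<forall>blk\<in>set bl. nonemp blk" using wf by (auto simp: wfin_def)
    show "a 0 + a 1 = 1" "(\<Sum>k<5. b k) = 1" "(\<Sum>k<5. zz k) = 1" "xs_of h = []" "nq h = 0"
      using st by (auto simp: stcond_def)
    show "\<forall>xs Y h'. length xs = length bl \<longrightarrow> xs_of h' = xs \<longrightarrow> nq h' = length bl \<longrightarrow> Good (Ph S bl) (length bl) xs Y \<longrightarrow>
       L \<le> reach (mach K) w (Ph S bl) (accs (mach K)) (Suc (Suc (Suc n0))) (to_nat TS) 0
         (V half (enc2 (real (bits_val S) - real (xsum bl xs) - real (ysum bl Y)) 0) (enc2 (real K * 2 ^ length bl) 0)) h'"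
    proof (intro allI impI)
      fix xs Y h'
      assume l: "length xs = length bl" and G: "Good (Ph S bl) (length bl) xs Y"
      have H: "\<forall>h''. xs_of h'' = xs \<longrightarrow> Ph S bl h'' = (if (\<lambda>k. yh S bl xs (length bl - 1 - k)) (nq h'') then 0 else 1)"
        by (simp add: Ph_def)
      have Yeq: "\<forall>i<length bl. Y i = (\<lambda>k. yh S bl xs (length bl - 1 - k)) (length bl - 1 - i)"
        by (rule G[unfolded Good_def, THEN spec[where x="\<lambda>k. yh S bl xs (length bl - 1 - k)"], THEN mp, OF H])
      have "ysum bl Y = ysum bl (yh S bl xs)"
      proof (rule ysum_cong)
        fix i assume "i < length bl"
        then show "Y i = yh S bl xs i" using Yeq by auto
      qed
      then have c0: "real (bits_val S) - real (xsum bl xs) - real (ysum bl Y) = 0"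
        using yh_ok[OF kg l] by simp
      have zeq: "real K * 2 ^ length bl = z" by (simp add: z_def m_def)
      show "L \<le> reach (mach K) w (Ph S bl) (accs (mach K)) (Suc (Suc (Suc n0))) (to_nat TS) 0
         (V half (enc2 (real (bits_val S) - real (xsum bl xs) - real (ysum bl Y)) 0) (enc2 (real K * 2 ^ length bl) 0)) h'"
        unfolding c0 zeq by (rule test_lower0[OF AL zz])
    qed
  qed
  have "L \<le> avgF m (\<lambda>_. L)" by (rule avg_all) simp
  then show ?thesis using core by (simp add: L_def z_def m_def del: reach.simps)
qed

inductive acc1 :: "pst \<Rightarrow> kg_sym list \<Rightarrow> bool" where
  acc_end: "acc1 BlkEnd []"
| acc_step: "delta d s = Some d' \<Longrightarrow> acc1 d' u \<Longrightarrow> acc1 d (s # u)"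

lemma reach_rej: "reach (mach K) w P (rejs (mach K)) (Suc n) (to_nat Rej) pos v h = 1"
  by (simp add: mach_def)

lemma malformed_rej:
  assumes "\<not> acc1 d u" "w = pre @ u" "a 0 + a 1 = 1" "d \<noteq> ALP \<longrightarrow> a = half"
  shows "1 \<le> reach (mach K) w P (rejs (mach K)) (n + length u + 2) (to_nat (P1 d x)) (Suc (length pre)) (V a (enc2 c p) (enc2 z 0)) h"
  using assms
proof (induction u arbitrary: pre d x c p z a h)
  case Nil
  have ne: "d \<noteq> BlkEnd" using Nil.prems(1) acc_end by auto
  have tp: "tape w (Suc (length pre)) = REnd" using Nil.prems(2) tape_end[of w] by simp
  have nh: "P1 d x \<noteq> Acc" "P1 d x \<noteq> Rej" by auto
  have Wq: "W (P1 d x) (tape w (Suc (length pre))) = {}" using tp by (simp add: W_def)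
  have "reach (mach K) w P (rejs (mach K)) (Suc (Suc n)) (to_nat (P1 d x)) (Suc (length pre)) (V a (enc2 c p) (enc2 z 0)) h = 1"
    unfolding reach_det[OF nh Wq] tp using ne by (simp add: reach_rej del: reach.simps)
  then show ?case by simp
next
  case (Cons s u)
  have tp: "tape w (Suc (length pre)) = Sym s" using Cons.prems(2) by (simp add: tape_at)
  have nh: "P1 d x \<noteq> Acc" "P1 d x \<noteq> Rej" "P1 d x \<noteq> Start" by auto
  have e: "n + length (s # u) + 2 = Suc (n + length u + 2)" by simp
  have e2: "nat (int (Suc (length pre)) + 1) = Suc (Suc (length pre))" by simp
  show ?case
  proof (cases "delta d s")
    case None
    then have cs: "\<not> coinstep (P1 d x) s" by (cases d) (auto split: if_splits)
    have st: "stp (P1 d x) (Sym s) (P h) (\<lambda>_. 0) = (Rej, 0)" using None by simp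
    have "reach (mach K) w P (rejs (mach K)) (Suc (n + length u + 2)) (to_nat (P1 d x)) (Suc (length pre)) (V a (enc2 c p) (enc2 z 0)) h = 1"
      using step_sym[where K=K and T="rejs (mach K)" and n="n + length u + 2" and P=P and h=h and c=c and p=p and zz="enc2 z 0", OF nh tp cs st Cons.prems(3) enc2_hi] by (simp add: reach_rej del: reach.simps)
    then show ?thesis unfolding e by (simp del: reach.simps)
  next
    case (Some d')
    have na: "\<not> acc1 d' u" using Cons.prems(1) Some acc_step by blast
    have w2: "w = (pre @ [s]) @ u" using Cons.prems(2) by simp
    show ?thesis
    proof (cases "coinstep (P1 d x) s")
      case True
      then have dd: "d = S1 \<or> d = BlkEnd" "s = All" by auto
      then have dA: "d' = ALP" using Some by (auto simp: isbit_def)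
      have ah: "a = half" using Cons.prems(4) dd by auto
      have IH: "1 \<le> reach (mach K) w P (rejs (mach K)) (n + length u + 2) (to_nat (P1 d' t)) (Suc (length (pre @ [s])))
          (V (ee j) (enc2 c p) (enc2 (2 * z) 0)) h'" if "j < 2" for t j h'
        by (rule Cons.IH[OF na w2 ee_sum[OF that]]) (simp add: dA)
      have "reach (mach K) w P (rejs (mach K)) (Suc (n + length u + 2)) (to_nat (P1 d x)) (Suc (length pre)) (V a (enc2 c p) (enc2 z 0)) h =
        1/2 * reach (mach K) w P (rejs (mach K)) (n + length u + 2) (to_nat (P1 ALP True)) (Suc (Suc (length pre))) (V (ee 0) (enc2 c p) (enc2 (2 * z) 0))
          (h @ [(to_nat (P1 ALP True), Suc (Suc (length pre)), (\<lambda>_. 0)(0 := 0))]) +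
        1/2 * reach (mach K) w P (rejs (mach K)) (n + length u + 2) (to_nat (P1 ALP False)) (Suc (Suc (length pre))) (V (ee 1) (enc2 c p) (enc2 (2 * z) 0))
          (h @ [(to_nat (P1 ALP False), Suc (Suc (length pre)), (\<lambda>_. 0)(0 := 1))])"
        unfolding ah using coin_step[OF dd(1)] tp dd(2) by blast
      moreover have "1 \<le> \<dots>"
        using IH[of 0 True "h @ [(to_nat (P1 ALP True), Suc (Suc (length pre)), (\<lambda>_. 0)(0 := 0))]"]
              IH[of 1 False "h @ [(to_nat (P1 ALP False), Suc (Suc (length pre)), (\<lambda>_. 0)(0 := 1))]"] dA
        by (simp del: reach.simps)
      ultimately show ?thesis unfolding e by (simp del: reach.simps)
    next
      case False
      have st: "stp (P1 d x) (Sym s) (P h) (\<lambda>_. 0) = (P1 d' x, 1)" using Some False by auto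
      have "reach (mach K) w P (rejs (mach K)) (Suc (n + length u + 2)) (to_nat (P1 d x)) (Suc (length pre)) (V a (enc2 c p) (enc2 z 0)) h =
         reach (mach K) w P (rejs (mach K)) (n + length u + 2) (to_nat (P1 d' x)) (Suc (Suc (length pre)))
           (V half (enc2 (fst (opc (P1 d x) s (c, p))) (snd (opc (P1 d x) s (c, p)))) (enc2 z 0))
           (h @ [(to_nat (P1 d' x), Suc (Suc (length pre)), \<lambda>_. 0)])"
        using step_sym[where K=K and T="rejs (mach K)" and n="n + length u + 2" and P=P and h=h and c=c and p=p and zz="enc2 z 0", OF nh tp False st Cons.prems(3) enc2_hi] unfolding e2 by (simp del: reach.simps)
      moreover have "1 \<le> \<dots>"
        using Cons.IH[OF na w2 half_sum] by (simp del: reach.simps)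
      ultimately show ?thesis unfolding e by (simp del: reach.simps)
    qed
  qed
qed

definition Rest :: "kg_sym list \<Rightarrow> bool" where
  "Rest u \<longleftrightarrow> (\<exists>bl. u = concat (map enc_block bl) \<and> (\<forall>blk\<in>set bl. nonemp blk))"

abbreviation "TLf f r \<equiv> enc_bits f @ RP # r"
abbreviation "TLe e f r \<equiv> enc_bits e @ Cm # TLf f r"
abbreviation "TLb b e f r \<equiv> enc_bits b @ RP # Ex # LP # TLe e f r"
abbreviation "TLa a b e f r \<equiv> enc_bits a @ Cm # TLb b e f r"

fun lang :: "pst \<Rightarrow> kg_sym list \<Rightarrow> bool" where
  "lang BlkEnd u = Rest u"
| "lang Ef2 u = (\<exists>f r. u = TLf f r \<and> Rest r)"
| "lang Ef1 u = (\<exists>f r. f \<noteq> [] \<and> u = TLf f r \<and> Rest r)"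
| "lang Ee2 u = (\<exists>e f r. f \<noteq> [] \<and> u = TLe e f r \<and> Rest r)"
| "lang Ee1 u = (\<exists>e f r. e \<noteq> [] \<and> f \<noteq> [] \<and> u = TLe e f r \<and> Rest r)"
| "lang ELP u = (\<exists>e f r. e \<noteq> [] \<and> f \<noteq> [] \<and> u = LP # TLe e f r \<and> Rest r)"
| "lang EEx u = (\<exists>e f r. e \<noteq> [] \<and> f \<noteq> [] \<and> u = Ex # LP # TLe e f r \<and> Rest r)"
| "lang Ab2 u = (\<exists>b e f r. e \<noteq> [] \<and> f \<noteq> [] \<and> u = TLb b e f r \<and> Rest r)"
| "lang Ab1 u = (\<exists>b e f r. b \<noteq> [] \<and> e \<noteq> [] \<and> f \<noteq> [] \<and> u = TLb b e f r \<and> Rest r)"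
| "lang Aa2 u = (\<exists>a b e f r. b \<noteq> [] \<and> e \<noteq> [] \<and> f \<noteq> [] \<and> u = TLa a b e f r \<and> Rest r)"
| "lang Aa1 u = (\<exists>a b e f r. a \<noteq> [] \<and> b \<noteq> [] \<and> e \<noteq> [] \<and> f \<noteq> [] \<and> u = TLa a b e f r \<and> Rest r)"
| "lang ALP u = (\<exists>a b e f r. a \<noteq> [] \<and> b \<noteq> [] \<and> e \<noteq> [] \<and> f \<noteq> [] \<and> u = LP # TLa a b e f r \<and> Rest r)"
| "lang S1 u = (\<exists>S a b e f r. a \<noteq> [] \<and> b \<noteq> [] \<and> e \<noteq> [] \<and> f \<noteq> [] \<and> u = enc_bits S @ All # LP # TLa a b e f r \<and> Rest r)"
| "lang S0 u = (\<exists>S a b e f r. S \<noteq> [] \<and> a \<noteq> [] \<and> b \<noteq> [] \<and> e \<noteq> [] \<and> f \<noteq> [] \<and> u = enc_bits S @ All # LP # TLa a b e f r \<and> Rest r)"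

lemma bitc: "isbit s \<Longrightarrow> s # enc_bits bs @ v = enc_bits ((s = B1) # bs) @ v"
  by (auto simp: isbit_def enc_bits_def)

lemma bsym_bit: "isbit s \<Longrightarrow> bsym (s = B1) = s" by (auto simp: isbit_def bsym_def)

lemma Rest_Nil: "Rest []" unfolding Rest_def by (rule exI[of _ "[]"]) simp

lemma Rest_Cons: "a \<noteq> [] \<Longrightarrow> b \<noteq> [] \<Longrightarrow> e \<noteq> [] \<Longrightarrow> f \<noteq> [] \<Longrightarrow> Rest r \<Longrightarrow>
   Rest (All # LP # TLa a b e f r)"
proof -
  assume ne: "a \<noteq> []" "b \<noteq> []" "e \<noteq> []" "f \<noteq> []" and "Rest r"
  then obtain bl where bl: "r = concat (map enc_block bl)" "\<forall>blk\<in>set bl. nonemp blk" unfolding Rest_def by blast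
  show ?thesis unfolding Rest_def
    by (rule exI[of _ "(a, b, e, f) # bl"]) (use ne bl in \<open>simp add: enc_block_eq nonemp_def\<close>)
qed

lemma lang_step: "delta d s = Some d' \<Longrightarrow> lang d' u \<Longrightarrow> lang d (s # u)"
proof (cases d)
  case S0
  assume "delta d s = Some d'" "lang d' u"
  then have b: "isbit s" "d' = S1" using S0 by (auto split: if_splits)
  then obtain S a b' e f r where "a \<noteq> [] \<and> b' \<noteq> [] \<and> e \<noteq> [] \<and> f \<noteq> [] \<and> u = enc_bits S @ All # LP # TLa a b' e f r \<and> Rest r"
    using \<open>lang d' u\<close> by auto
  then show ?thesis unfolding S0 lang.simps using bsym_bit b by (intro exI[of _ "(s = B1) # S"] exI[of _ a] exI[of _ b'] exI[of _ e] exI[of _ f] exI[of _ r]) (auto simp: enc_bits_Cons)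
next
  case S1
  assume "delta d s = Some d'" "lang d' u"
  then have "(isbit s \<and> d' = S1) \<or> (s = All \<and> d' = ALP)" using S1 by (auto split: if_splits)
  then show ?thesis
  proof
    assume b: "isbit s \<and> d' = S1"
    then obtain S a b' e f r where "a \<noteq> [] \<and> b' \<noteq> [] \<and> e \<noteq> [] \<and> f \<noteq> [] \<and> u = enc_bits S @ All # LP # TLa a b' e f r \<and> Rest r"
      using \<open>lang d' u\<close> by auto
    then show ?thesis unfolding S1 lang.simps using bsym_bit b by (intro exI[of _ "(s = B1) # S"] exI[of _ a] exI[of _ b'] exI[of _ e] exI[of _ f] exI[of _ r]) (auto simp: enc_bits_Cons)
  next
    assume b: "s = All \<and> d' = ALP"
    then obtain a b' e f r where "a \<noteq> [] \<and> b' \<noteq> [] \<and> e \<noteq> [] \<and> f \<noteq> [] \<and> u = LP # TLa a b' e f r \<and> Rest r"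
      using \<open>lang d' u\<close> by auto
    then show ?thesis unfolding S1 lang.simps using b by (intro exI[of _ "[]"] exI[of _ a] exI[of _ b'] exI[of _ e] exI[of _ f] exI[of _ r]) (auto simp: enc_bits_Nil)
  qed
next
  case ALP
  assume "delta d s = Some d'" "lang d' u"
  then have b: "s = LP" "d' = Aa1" using ALP by (auto split: if_splits)
  then show ?thesis using ALP \<open>lang d' u\<close> by auto
next
  case Aa1
  assume "delta d s = Some d'" "lang d' u"
  then have b: "isbit s" "d' = Aa2" using Aa1 by (auto split: if_splits)
  then obtain a b' e f r where "b' \<noteq> [] \<and> e \<noteq> [] \<and> f \<noteq> [] \<and> u = TLa a b' e f r \<and> Rest r"
    using \<open>lang d' u\<close> by auto
  then show ?thesis unfolding Aa1 lang.simps using bsym_bit b by (intro exI[of _ "(s = B1) # a"] exI[of _ b'] exI[of _ e] exI[of _ f] exI[of _ r]) (auto simp: enc_bits_Cons)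
next
  case Aa2
  assume "delta d s = Some d'" "lang d' u"
  then have "(isbit s \<and> d' = Aa2) \<or> (s = Cm \<and> d' = Ab1)" using Aa2 by (auto split: if_splits)
  then show ?thesis
  proof
    assume b: "isbit s \<and> d' = Aa2"
    then obtain a b' e f r where "b' \<noteq> [] \<and> e \<noteq> [] \<and> f \<noteq> [] \<and> u = TLa a b' e f r \<and> Rest r"
      using \<open>lang d' u\<close> by auto
    then show ?thesis unfolding Aa2 lang.simps using bsym_bit b by (intro exI[of _ "(s = B1) # a"] exI[of _ b'] exI[of _ e] exI[of _ f] exI[of _ r]) (auto simp: enc_bits_Cons)
  next
    assume b: "s = Cm \<and> d' = Ab1"
    then obtain b' e f r where "b' \<noteq> [] \<and> e \<noteq> [] \<and> f \<noteq> [] \<and> u = TLb b' e f r \<and> Rest r"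
      using \<open>lang d' u\<close> by auto
    then show ?thesis unfolding Aa2 lang.simps using b by (intro exI[of _ "[]"] exI[of _ b'] exI[of _ e] exI[of _ f] exI[of _ r]) (auto simp: enc_bits_Nil)
  qed
next
  case Ab1
  assume "delta d s = Some d'" "lang d' u"
  then have b: "isbit s" "d' = Ab2" using Ab1 by (auto split: if_splits)
  then obtain b' e f r where "e \<noteq> [] \<and> f \<noteq> [] \<and> u = TLb b' e f r \<and> Rest r"
    using \<open>lang d' u\<close> by auto
  then show ?thesis unfolding Ab1 lang.simps using bsym_bit b by (intro exI[of _ "(s = B1) # b'"] exI[of _ e] exI[of _ f] exI[of _ r]) (auto simp: enc_bits_Cons)
next
  case Ab2
  assume "delta d s = Some d'" "lang d' u"
  then have "(isbit s \<and> d' = Ab2) \<or> (s = RP \<and> d' = EEx)" using Ab2 by (auto split: if_splits)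
  then show ?thesis
  proof
    assume b: "isbit s \<and> d' = Ab2"
    then obtain b' e f r where "e \<noteq> [] \<and> f \<noteq> [] \<and> u = TLb b' e f r \<and> Rest r"
      using \<open>lang d' u\<close> by auto
    then show ?thesis unfolding Ab2 lang.simps using bsym_bit b by (intro exI[of _ "(s = B1) # b'"] exI[of _ e] exI[of _ f] exI[of _ r]) (auto simp: enc_bits_Cons)
  next
    assume b: "s = RP \<and> d' = EEx"
    then obtain e f r where "e \<noteq> [] \<and> f \<noteq> [] \<and> u = Ex # LP # TLe e f r \<and> Rest r"
      using \<open>lang d' u\<close> by auto
    then show ?thesis unfolding Ab2 lang.simps using b by (intro exI[of _ "[]"] exI[of _ e] exI[of _ f] exI[of _ r]) (auto simp: enc_bits_Nil)
  qed
next
  case EEx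
  assume "delta d s = Some d'" "lang d' u"
  then have b: "s = Ex" "d' = ELP" using EEx by (auto split: if_splits)
  then show ?thesis using EEx \<open>lang d' u\<close> by auto
next
  case ELP
  assume "delta d s = Some d'" "lang d' u"
  then have b: "s = LP" "d' = Ee1" using ELP by (auto split: if_splits)
  then show ?thesis using ELP \<open>lang d' u\<close> by auto
next
  case Ee1
  assume "delta d s = Some d'" "lang d' u"
  then have b: "isbit s" "d' = Ee2" using Ee1 by (auto split: if_splits)
  then obtain e f r where "f \<noteq> [] \<and> u = TLe e f r \<and> Rest r"
    using \<open>lang d' u\<close> by auto
  then show ?thesis unfolding Ee1 lang.simps using bsym_bit b by (intro exI[of _ "(s = B1) # e"] exI[of _ f] exI[of _ r]) (auto simp: enc_bits_Cons)
next
  case Ee2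
  assume "delta d s = Some d'" "lang d' u"
  then have "(isbit s \<and> d' = Ee2) \<or> (s = Cm \<and> d' = Ef1)" using Ee2 by (auto split: if_splits)
  then show ?thesis
  proof
    assume b: "isbit s \<and> d' = Ee2"
    then obtain e f r where "f \<noteq> [] \<and> u = TLe e f r \<and> Rest r"
      using \<open>lang d' u\<close> by auto
    then show ?thesis unfolding Ee2 lang.simps using bsym_bit b by (intro exI[of _ "(s = B1) # e"] exI[of _ f] exI[of _ r]) (auto simp: enc_bits_Cons)
  next
    assume b: "s = Cm \<and> d' = Ef1"
    then obtain f r where "f \<noteq> [] \<and> u = TLf f r \<and> Rest r"
      using \<open>lang d' u\<close> by auto
    then show ?thesis unfolding Ee2 lang.simps using b by (intro exI[of _ "[]"] exI[of _ f] exI[of _ r]) (auto simp: enc_bits_Nil)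
  qed
next
  case Ef1
  assume "delta d s = Some d'" "lang d' u"
  then have b: "isbit s" "d' = Ef2" using Ef1 by (auto split: if_splits)
  then obtain f r where "u = TLf f r \<and> Rest r"
    using \<open>lang d' u\<close> by auto
  then show ?thesis unfolding Ef1 lang.simps using bsym_bit b by (intro exI[of _ "(s = B1) # f"] exI[of _ r]) (auto simp: enc_bits_Cons)
next
  case Ef2
  assume "delta d s = Some d'" "lang d' u"
  then have "(isbit s \<and> d' = Ef2) \<or> (s = RP \<and> d' = BlkEnd)" using Ef2 by (auto split: if_splits)
  then show ?thesis
  proof
    assume b: "isbit s \<and> d' = Ef2"
    then obtain f r where "u = TLf f r \<and> Rest r"
      using \<open>lang d' u\<close> by auto
    then show ?thesis unfolding Ef2 lang.simps using bsym_bit b by (intro exI[of _ "(s = B1) # f"] exI[of _ r]) (auto simp: enc_bits_Cons)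
  next
    assume b: "s = RP \<and> d' = BlkEnd"
    then show ?thesis unfolding Ef2 lang.simps using \<open>lang d' u\<close> by (intro exI[of _ "[]"] exI[of _ u]) (auto simp: enc_bits_Nil)
  qed
next
  case BlkEnd
  assume "delta d s = Some d'" "lang d' u"
  then have b: "s = All" "d' = ALP" using BlkEnd by (auto split: if_splits)
  then obtain a b' e f r where "a \<noteq> [] \<and> b' \<noteq> [] \<and> e \<noteq> [] \<and> f \<noteq> [] \<and> u = LP # TLa a b' e f r \<and> Rest r"
    using \<open>lang d' u\<close> by auto
  then show ?thesis using BlkEnd b Rest_Cons by auto
qed

lemma acc1_lang: "acc1 d u \<Longrightarrow> lang d u"
  by (induction rule: acc1.induct) (auto simp: Rest_Nil intro: lang_step)

lemma acc1_S0: "acc1 S0 w \<Longrightarrow> \<exists>S bl. w = enc_bits S @ concat (map enc_block bl) \<and> wfin S bl"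
proof -
  assume "acc1 S0 w"
  then have "lang S0 w" by (rule acc1_lang)
  then obtain S a b e f r where ne: "S \<noteq> []" "a \<noteq> []" "b \<noteq> []" "e \<noteq> []" "f \<noteq> []"
    and w: "w = enc_bits S @ All # LP # TLa a b e f r" and "Rest r" by auto
  then obtain bl where bl: "r = concat (map enc_block bl)" "\<forall>blk\<in>set bl. nonemp blk" unfolding Rest_def by blast
  show ?thesis
    by (rule exI[of _ S], rule exI[of _ "(a, b, e, f) # bl"])
       (use ne w bl in \<open>simp add: enc_block_eq nonemp_def wfin_def\<close>)
qed

lemma init_regs_mach: "init_regs (mach K) = V half (enc2 0 0) (enc2 0 0)"
proof (rule ext)+
  fix r i
  show "init_regs (mach K) r i = V half (enc2 0 0) (enc2 0 0) r i"
    by (auto simp: init_regs_def mach_def V_def half_def e4r_def enc2_def of_rat_divide)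
qed

lemma stcond_init: "stcond half (enc2 0 0) (enc2 0 0) []"
  by (simp add: stcond_def half_def sum_enc2 xs_of_def nq_def seg_Nil)

lemma reach_bdd: "bdd_above ((\<lambda>n. reach (mach K) w P T n (to_nat (q::st)) pos v h) ` UNIV)"
  by (rule bdd_aboveI[of _ 1]) (auto intro: reach_le1)

lemma L_KG_E:
  assumes "w \<in> L_KG"
  obtains S bl where "w = enc_bits S @ concat (map enc_block bl)" "wfin S bl" "kg_true S bl"
proof -
  from assms obtain S bl where "w = enc_bits S @ concat (map enc_block bl)" "S \<noteq> []" "bl \<noteq> []"
     "\<forall>(a, b, e, f) \<in> set bl. a \<noteq> [] \<and> b \<noteq> [] \<and> e \<noteq> [] \<and> f \<noteq> []" "kg_true S bl"
    unfolding L_KG_def by blast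
  then show ?thesis using that by (auto simp: wfin_def nonemp_def)
qed

lemma L_KG_I: "w = enc_bits S @ concat (map enc_block bl) \<Longrightarrow> wfin S bl \<Longrightarrow> kg_true S bl \<Longrightarrow> w \<in> L_KG"
  unfolding L_KG_def wfin_def by (auto simp: nonemp_def)

lemma completeness:
  assumes "w \<in> L_KG"
  shows "\<exists>P. prover_ok (mach K) P \<and> acc_prob (mach K) w P = 1"
proof -
  obtain S bl where w: "w = enc_bits S @ concat (map enc_block bl)" and wf: "wfin S bl" and kg: "kg_true S bl"
    using assms by (rule L_KG_E)
  define P where "P = Ph S bl"
  have pok: "prover_ok (mach K) P" by (simp add: prover_ok_def P_def Ph_def mach_def)
  define z where "z = real K * 2 ^ length bl"
  define q where "q = 1 / (2 * z + 1)"
  define N where "N = 2 * length w + 4"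
  have z0: "z \<ge> 0" by (simp add: z_def)
  have q0: "0 < q" "q \<le> 1" using z0 by (auto simp: q_def field_simps)
  have qq: "2 * z / (2 * z + 1) = 1 - q" using z0 by (simp add: q_def field_simps)
  have claim: "\<forall>a b zz h. stcond a b zz h \<longrightarrow> 1 - (1 - q) ^ k \<le> reach (mach K) w P (accs (mach K)) (Suc (k * N)) (to_nat Start) 0 (V a b zz) h" for k
  proof (induction k)
    case 0 then show ?case by (auto intro: reach_nonneg)
  next
    case (Suc k)
    have B0: "0 \<le> 1 - (1 - q) ^ k" using q0 by (simp add: power_le_one)
    show ?case
    proof (intro allI impI)
      fix a b zz h assume st: "stcond a b zz h"
      have "q + (1 - q) * (1 - (1 - q) ^ k) \<le> reach (mach K) w P (accs (mach K)) (Suc (Suc (Suc (k * N))) + (2 * length w + 2)) (to_nat Start) 0 (V a b zz) h"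
        using comp_round[OF w wf kg B0 _ st, of K "k * N"] Suc.IH unfolding P_def q_def[symmetric] z_def[symmetric] qq
        by (simp add: q_def del: reach.simps)
      moreover have e: "Suc (Suc k * N) = Suc (Suc (Suc (k * N))) + (2 * length w + 2)" by (simp add: N_def)
      moreover have e2: "1 - (1 - q) ^ Suc k = q + (1 - q) * (1 - (1 - q) ^ k)" by (simp add: algebra_simps)
      ultimately show "1 - (1 - q) ^ Suc k \<le> reach (mach K) w P (accs (mach K)) (Suc (Suc k * N)) (to_nat Start) 0 (V a b zz) h"
        by (simp only:)
    qed
  qed
  define R where "R = (\<lambda>n. reach (mach K) w P (accs (mach K)) n (to_nat Start) 0 (V half (enc2 0 0) (enc2 0 0)) [])"
  have acc: "acc_prob (mach K) w P = (SUP n. R n)"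
    by (simp add: acc_prob_def R_def init_regs_mach) (simp add: mach_def)
  have le1: "(SUP n. R n) \<le> 1" by (rule cSUP_least) (auto simp: R_def intro: reach_le1)
  have ge1: "(SUP n. R n) \<ge> 1"
  proof (rule ccontr)
    assume "\<not> (SUP n. R n) \<ge> 1"
    then have lt: "(SUP n. R n) < 1" by simp
    have "1 - q < 1" using q0 by simp
    then obtain k where k: "(1 - q) ^ k < 1 - (SUP n. R n)" using real_arch_pow_inv[of "1 - (SUP n. R n)" "1 - q"] lt by auto
    have "1 - (1 - q) ^ k \<le> R (Suc (k * N))" using claim[of k] stcond_init by (simp add: R_def del: reach.simps)
    also have "\<dots> \<le> (SUP n. R n)" by (rule cSUP_upper) (auto simp: R_def intro: reach_bdd)
    finally show False using k by simp
  qed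
  show ?thesis using pok acc le1 ge1 by auto
qed

lemma soundness:
  assumes nL: "w \<notin> L_KG" and e0: "0 < e" and Ke: "real K * e \<ge> 1"
  shows "1 - e \<le> rej_prob (mach K) w P"
proof -
  define R where "R = (\<lambda>n. reach (mach K) w P (rejs (mach K)) n (to_nat Start) 0 (V half (enc2 0 0) (enc2 0 0)) [])"
  have rej: "rej_prob (mach K) w P = (SUP n. R n)"
    by (simp add: rej_prob_def R_def init_regs_mach) (simp add: mach_def)
  have suff: "\<exists>n. 1 - e \<le> R n"
  proof (cases "acc1 S0 w")
    case False
    have st: "R (Suc (0 + length w + 2)) = reach (mach K) w P (rejs (mach K)) (0 + length w + 2) (to_nat (P1 S0 False)) 1
        (V half (enc2 0 0) (enc2 (real K) 0)) [(to_nat (P1 S0 False), 1, \<lambda>_. 0)]"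
      unfolding R_def using start_step[where K=K and w=w and P=P and T="rejs (mach K)" and n="0 + length w + 2" and h="[]", OF half_sum sum_enc2 sum_enc2]
      by (simp del: reach.simps)
    have "1 \<le> reach (mach K) w P (rejs (mach K)) (0 + length w + 2) (to_nat (P1 S0 False)) (Suc (length ([]::kg_sym list)))
        (V half (enc2 0 0) (enc2 (real K) 0)) [(to_nat (P1 S0 False), 1, \<lambda>_. 0)]"
      by (rule malformed_rej[OF False]) (simp_all add: half_def)
    then have "1 \<le> R (Suc (0 + length w + 2))" unfolding st by simp
    then show ?thesis using e0 by (intro exI[of _ "Suc (0 + length w + 2)"]) simp
  next
    case True
    obtain S bl where w: "w = enc_bits S @ concat (map enc_block bl)" and wf: "wfin S bl"
      using acc1_S0[OF True] by blast
    have nk: "\<not> kg_true S bl" using nL L_KG_I[OF w wf] by blast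
    define m where "m = length bl"
    define z where "z = real K * 2 ^ m"
    define q where "q = 1 / (2 * z + 1)"
    define r where "r = (2/3) / (2::real) ^ m"
    define \<beta> where "\<beta> = (1 - r) * (1 - q)"
    define Tt where "Tt = r / (1 - \<beta>)"
    define N where "N = 2 * length w + 4"
    have K1: "real K \<ge> 1"
    proof (rule ccontr)
      assume "\<not> real K \<ge> 1" then have "K = 0" by simp
      then show False using Ke by simp
    qed
    have z1: "z \<ge> 1"
    proof -
      have "(1::real) * 1 \<le> real K * 2 ^ m" by (rule mult_mono) (use K1 in auto)
      then show ?thesis by (simp add: z_def)
    qed
    have q0: "0 < q" "q \<le> 1" using z1 by (auto simp: q_def field_simps)
    have r0: "0 < r" "r \<le> 2/3" by (auto simp: r_def field_simps)
    have qq: "2 * z / (2 * z + 1) = 1 - q" using z1 by (simp add: q_def field_simps)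
    have b1: "1 - \<beta> = r + q * (1 - r)" by (simp add: \<beta>_def algebra_simps)
    have qr: "0 \<le> q * (1 - r)" using q0 r0 by (intro mult_nonneg_nonneg) auto
    have bpos: "1 - \<beta> > 0" using b1 qr r0 by linarith
    have rb: "r \<le> 1 - \<beta>" using b1 qr by linarith
    have b0: "0 \<le> \<beta>" using q0 r0 by (simp add: \<beta>_def)
    have T1: "0 \<le> Tt" "Tt \<le> 1"
      using bpos r0 rb by (simp_all add: Tt_def divide_le_eq_1_pos)
    have Tfix: "r + \<beta> * Tt = Tt" using bpos by (simp add: Tt_def field_simps)
    have claim: "\<forall>a b zz h. stcond a b zz h \<longrightarrow> Tt - Tt * \<beta> ^ k \<le> R' (Suc (k * N)) a b zz h"
      if R'_def: "R' = (\<lambda>n a b zz h. reach (mach K) w P (rejs (mach K)) n (to_nat Start) 0 (V a b zz) h)" for k R'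
    proof (induction k)
      case 0 then show ?case by (auto simp: R'_def intro: reach_nonneg)
    next
      case (Suc k)
      have bk: "0 \<le> \<beta> ^ k" "\<beta> ^ k \<le> 1" using b0 bpos by (auto intro: power_le_one)
      have Tb: "Tt * \<beta> ^ k \<le> Tt" "0 \<le> Tt * \<beta> ^ k" using T1 bk by (simp_all add: mult_left_le)
      have B0: "0 \<le> Tt - Tt * \<beta> ^ k" using Tb by linarith
      have B1: "Tt - Tt * \<beta> ^ k \<le> 1" using Tb T1 by linarith
      show ?case
      proof (intro allI impI)
        fix a b zz h assume st: "stcond a b zz h"
        have IH': "\<forall>a b zz h. stcond a b zz h \<longrightarrow> Tt - Tt * \<beta> ^ k \<le> reach (mach K) w P (rejs (mach K)) (Suc (k * N)) (to_nat Start) 0 (V a b zz) h"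
          using Suc.IH unfolding R'_def by (simp del: reach.simps)
        have X: "r + (1 - r) * ((1 - q) * (Tt - Tt * \<beta> ^ k)) \<le> reach (mach K) w P (rejs (mach K)) (Suc (Suc (Suc (k * N))) + (2 * length w + 2)) (to_nat Start) 0 (V a b zz) h"
          using sound_round[where K=K and P=P, OF w wf nk B0 B1 IH' st]
          by (simp add: qq[unfolded z_def m_def] q_def z_def m_def r_def del: reach.simps)
        have e: "Suc (Suc k * N) = Suc (Suc (Suc (k * N))) + (2 * length w + 2)" by (simp add: N_def)
        have e2: "Tt - Tt * \<beta> ^ Suc k = r + (1 - r) * ((1 - q) * (Tt - Tt * \<beta> ^ k))"
        proof -
          have "r + (1 - r) * ((1 - q) * (Tt - Tt * \<beta> ^ k)) = r + \<beta> * Tt - Tt * \<beta> ^ Suc k"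
            by (simp add: \<beta>_def algebra_simps)
          then show ?thesis using Tfix by simp
        qed
        show "Tt - Tt * \<beta> ^ Suc k \<le> R' (Suc (Suc k * N)) a b zz h"
          unfolding R'_def e e2 using X by simp
      qed
    qed
    have oneT: "1 - Tt \<le> 3 * e / 4"
    proof -
      have "1 - Tt = q * (1 - r) / (1 - \<beta>)" using bpos b1 by (simp add: Tt_def field_simps)
      also have "\<dots> \<le> q / r"
      proof (rule frac_le)
        show "0 \<le> q" "0 < r" "r \<le> 1 - \<beta>" using q0 r0 rb by auto
        show "q * (1 - r) \<le> q" using q0 r0 by (simp add: mult_left_le)
      qed
      also have "q / r = 3 * 2 ^ m / (2 * (2 * z + 1))" by (simp add: q_def r_def field_simps)
      also have "\<dots> \<le> 3 * 2 ^ m / (4 * z)" using z1 by (intro divide_left_mono) auto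
      also have "\<dots> = 3 / (4 * real K)" using K1 by (simp add: z_def field_simps)
      also have "\<dots> \<le> 3 * e / 4" using Ke K1 by (simp add: field_simps)
      finally show ?thesis .
    qed
    have "\<beta> < 1" using bpos by simp
    then obtain k where k: "\<beta> ^ k < e / 4" using real_arch_pow_inv[of "e / 4" \<beta>] e0 by auto
    have "Tt - Tt * \<beta> ^ k \<le> R (Suc (k * N))"
      using claim[OF refl, of k] stcond_init by (simp add: R_def del: reach.simps)
    moreover have "Tt * \<beta> ^ k \<le> \<beta> ^ k" using T1 b0 by (simp add: mult_left_le_one_le)
    ultimately have "1 - e \<le> R (Suc (k * N))" using oneT k by linarith
    then show ?thesis by blast
  qed
  then obtain n where "1 - e \<le> R n" by blast
  also have "R n \<le> (SUP n. R n)" by (rule cSUP_upper) (auto simp: R_def intro: reach_bdd)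
  finally show ?thesis using rej by simp
qed

theorem theorem7:
  fixes eps :: rat
  assumes "0 < eps" and "eps < 1/2"
  shows "\<exists>M :: kg_sym adfa. verifies_with_error M L_KG eps \<and> perfect_completeness M L_KG"
proof -
  define e where "e = real_of_rat eps"
  have e0: "0 < e" using assms(1) by (simp add: e_def)
  define K where "K = nat \<lceil>1 / e\<rceil>"
  have "real K \<ge> 1 / e" unfolding K_def by linarith
  then have Ke: "real K * e \<ge> 1" using e0 by (simp add: field_simps)
  have "verifies_with_error (mach K) L_KG eps"
    unfolding verifies_with_error_def
  proof (intro conjI ballI allI impI)
    show "wf_adfa (mach K)" by (rule wf_mach)
  next
    fix w assume "w \<in> L_KG"
    then obtain P where "prover_ok (mach K) P" "acc_prob (mach K) w P = 1" using completeness by blast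
    then show "\<exists>P. prover_ok (mach K) P \<and> 1 - real_of_rat eps \<le> acc_prob (mach K) w P"
      using e0 by (auto simp: e_def)
  next
    fix w P assume "w \<notin> L_KG" "prover_ok (mach K) P"
    then show "1 - real_of_rat eps \<le> rej_prob (mach K) w P"
      using soundness[OF _ e0 Ke] by (simp add: e_def)
  qed
  moreover have "perfect_completeness (mach K) L_KG"
    unfolding perfect_completeness_def using completeness by blast
  ultimately show ?thesis by blast
qed


end
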